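(* Let $\mathcal{T}$ be a K3 category and $E\in\mathcal{T}$ a spherical object. Define objects $E_n$ inductively by $E_1:=E$ and, given $E_n$, letting $E_{n+1}$ be defined by a distinguished triangle $E_{n+1}\to E\to E_n[2]\to E_{n+1}[1]$ whose middle map is a nonzero morphism $E\to E_n[2]$. Then $\mathrm{Hom}(E,E_n[2])$ is one-dimensional for every $n\ge1$ (so the construction is well defined up to isomorphism), and for all positive integers $m\le n$ one has $(E_m,E_n)^i=1$ if $i\in\{-n+1,\dots,-n+m\}$, $(E_m,E_n)^i=1$ if $i\in\{2,\dots,m+1\}$, and $(E_m,E_n)^i=0$ otherwise.
   Context: All categories are linear over a field $k$ of characteristic $\neq 2$ and of finite type. A K3 category is such a triangulated category in which $E\mapsto E[2]$ is a Serre functor ($\mathrm{Hom}(E,F)\cong\mathrm{Hom}(F,E[2])^*$ functorially). Write $(E,F)^i=\dim_k\mathrm{Hom}(E,F[i])$. An object $E$ is spherical if $(E,E)^0=(E,E)^2=1$ and $(E,E)^i=0$ for $i\neq0,2$. *)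

theory Defs
  imports Main
begin

section \<open>k-linear categories (morphisms in a global type, Hom-sets as carriers)\<close>

record ('o, 'm, 'k) kcat =
  Ob    :: "'o set"
  Hom   :: "'o \<Rightarrow> 'o \<Rightarrow> 'm set"
  cmp   :: "'m \<Rightarrow> 'm \<Rightarrow> 'm"        (* cmp g f = g o f *)
  idm   :: "'o \<Rightarrow> 'm"
  addm  :: "'m \<Rightarrow> 'm \<Rightarrow> 'm"
  smul  :: "'k \<Rightarrow> 'm \<Rightarrow> 'm"
  zerom :: "'o \<Rightarrow> 'o \<Rightarrow> 'm"
  shO   :: "'o \<Rightarrow> 'o"               (* shift functor on objects, E \<mapsto> E[1] *)
  shM   :: "'m \<Rightarrow> 'm"
  dist  :: "('o \<times> 'o \<times> 'o \<times> 'm \<times> 'm \<times> 'm) set"  (* distinguished triangles A -f-> B -g-> C -h-> A[1] *)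

definition category :: "('o,'m,'k) kcat \<Rightarrow> bool" where
  "category C \<longleftrightarrow>
     (\<forall>A\<in>Ob C. idm C A \<in> Hom C A A) \<and>
     (\<forall>A\<in>Ob C. \<forall>B\<in>Ob C. \<forall>D\<in>Ob C. \<forall>f\<in>Hom C A B. \<forall>g\<in>Hom C B D. cmp C g f \<in> Hom C A D) \<and>
     (\<forall>A\<in>Ob C. \<forall>B\<in>Ob C. \<forall>f\<in>Hom C A B. cmp C f (idm C A) = f \<and> cmp C (idm C B) f = f) \<and>
     (\<forall>A\<in>Ob C. \<forall>B\<in>Ob C. \<forall>D\<in>Ob C. \<forall>F\<in>Ob C. \<forall>f\<in>Hom C A B. \<forall>g\<in>Hom C B D. \<forall>h\<in>Hom C D F.
         cmp C h (cmp C g f) = cmp C (cmp C h g) f)"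

definition klinear :: "('o,'m,'k::field) kcat \<Rightarrow> bool" where
  "klinear C \<longleftrightarrow> category C \<and>
     (\<forall>A\<in>Ob C. \<forall>B\<in>Ob C.
        zerom C A B \<in> Hom C A B \<and>
        (\<forall>f\<in>Hom C A B. \<forall>g\<in>Hom C A B. addm C f g \<in> Hom C A B) \<and>
        (\<forall>c. \<forall>f\<in>Hom C A B. smul C c f \<in> Hom C A B) \<and>
        (\<forall>f\<in>Hom C A B. \<forall>g\<in>Hom C A B. \<forall>h\<in>Hom C A B. addm C (addm C f g) h = addm C f (addm C g h)) \<and>
        (\<forall>f\<in>Hom C A B. \<forall>g\<in>Hom C A B. addm C f g = addm C g f) \<and>
        (\<forall>f\<in>Hom C A B. addm C (zerom C A B) f = f) \<and>
        (\<forall>f\<in>Hom C A B. \<exists>g\<in>Hom C A B. addm C f g = zerom C A B) \<and>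
        (\<forall>c. \<forall>f\<in>Hom C A B. \<forall>g\<in>Hom C A B. smul C c (addm C f g) = addm C (smul C c f) (smul C c g)) \<and>
        (\<forall>a b. \<forall>f\<in>Hom C A B. smul C (a + b) f = addm C (smul C a f) (smul C b f)) \<and>
        (\<forall>a b. \<forall>f\<in>Hom C A B. smul C (a * b) f = smul C a (smul C b f)) \<and>
        (\<forall>f\<in>Hom C A B. smul C 1 f = f)) \<and>
     (\<forall>A\<in>Ob C. \<forall>B\<in>Ob C. \<forall>D\<in>Ob C. \<forall>f\<in>Hom C A B. \<forall>f'\<in>Hom C A B. \<forall>g\<in>Hom C B D. \<forall>g'\<in>Hom C B D. \<forall>c.
        cmp C g (addm C f f') = addm C (cmp C g f) (cmp C g f') \<and>
        cmp C (addm C g g') f = addm C (cmp C g f) (cmp C g' f) \<and>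
        cmp C g (smul C c f) = smul C c (cmp C g f) \<and>
        cmp C (smul C c g) f = smul C c (cmp C g f))"

fun lincomb :: "('o,'m,'k) kcat \<Rightarrow> 'o \<Rightarrow> 'o \<Rightarrow> ('k \<times> 'm) list \<Rightarrow> 'm" where
  "lincomb C A B [] = zerom C A B"
| "lincomb C A B ((c, v) # xs) = addm C (smul C c v) (lincomb C A B xs)"

definition spans :: "('o,'m,'k) kcat \<Rightarrow> 'o \<Rightarrow> 'o \<Rightarrow> 'm list \<Rightarrow> bool" where
  "spans C A B vs \<longleftrightarrow> set vs \<subseteq> Hom C A B \<and>
     Hom C A B \<subseteq> {lincomb C A B (zip cs vs) | cs. length cs = length vs}"

definition hdim :: "('o,'m,'k) kcat \<Rightarrow> 'o \<Rightarrow> 'o \<Rightarrow> nat" where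
  "hdim C A B = (LEAST n. \<exists>vs. length vs = n \<and> spans C A B vs)"

definition iso_obj :: "('o,'m,'k) kcat \<Rightarrow> 'o \<Rightarrow> 'o \<Rightarrow> bool" where
  "iso_obj C A B \<longleftrightarrow> (\<exists>f\<in>Hom C A B. \<exists>g\<in>Hom C B A. cmp C g f = idm C A \<and> cmp C f g = idm C B)"

definition is_iso :: "('o,'m,'k) kcat \<Rightarrow> 'o \<Rightarrow> 'o \<Rightarrow> 'm \<Rightarrow> bool" where
  "is_iso C A B f \<longleftrightarrow> f \<in> Hom C A B \<and> (\<exists>g\<in>Hom C B A. cmp C g f = idm C A \<and> cmp C f g = idm C B)"

definition additive :: "('o,'m,'k::field) kcat \<Rightarrow> bool" where
  "additive C \<longleftrightarrow> klinear C \<and>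
     (\<exists>Z\<in>Ob C. \<forall>A\<in>Ob C. Hom C Z A = {zerom C Z A} \<and> Hom C A Z = {zerom C A Z}) \<and>
     (\<forall>A\<in>Ob C. \<forall>B\<in>Ob C. \<exists>S\<in>Ob C. \<exists>i1\<in>Hom C A S. \<exists>i2\<in>Hom C B S. \<exists>p1\<in>Hom C S A. \<exists>p2\<in>Hom C S B.
        cmp C p1 i1 = idm C A \<and> cmp C p2 i2 = idm C B \<and>
        cmp C p1 i2 = zerom C B A \<and> cmp C p2 i1 = zerom C A B \<and>
        addm C (cmp C i1 p1) (cmp C i2 p2) = idm C S)"

definition shift_equiv :: "('o,'m,'k::field) kcat \<Rightarrow> bool" where
  "shift_equiv C \<longleftrightarrow>
     (\<forall>A\<in>Ob C. shO C A \<in> Ob C) \<and>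
     (\<forall>A\<in>Ob C. \<forall>B\<in>Ob C. \<forall>f\<in>Hom C A B. shM C f \<in> Hom C (shO C A) (shO C B)) \<and>
     (\<forall>A\<in>Ob C. shM C (idm C A) = idm C (shO C A)) \<and>
     (\<forall>A\<in>Ob C. \<forall>B\<in>Ob C. \<forall>D\<in>Ob C. \<forall>f\<in>Hom C A B. \<forall>g\<in>Hom C B D. shM C (cmp C g f) = cmp C (shM C g) (shM C f)) \<and>
     (\<forall>A\<in>Ob C. \<forall>B\<in>Ob C. \<forall>f\<in>Hom C A B. \<forall>g\<in>Hom C A B. \<forall>c.
        shM C (addm C f g) = addm C (shM C f) (shM C g) \<and> shM C (smul C c f) = smul C c (shM C f)) \<and>
     (\<forall>A\<in>Ob C. \<forall>B\<in>Ob C. bij_betw (shM C) (Hom C A B) (Hom C (shO C A) (shO C B))) \<and>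
     (\<forall>B\<in>Ob C. \<exists>A\<in>Ob C. iso_obj C (shO C A) B)"

type_synonym ('o, 'm) triangle = "'o \<times> 'o \<times> 'o \<times> 'm \<times> 'm \<times> 'm"

definition tri_wf :: "('o,'m,'k) kcat \<Rightarrow> ('o,'m) triangle \<Rightarrow> bool" where
  "tri_wf C T \<longleftrightarrow> (case T of (A, B, D, f, g, h) \<Rightarrow>
     A \<in> Ob C \<and> B \<in> Ob C \<and> D \<in> Ob C \<and> f \<in> Hom C A B \<and> g \<in> Hom C B D \<and> h \<in> Hom C D (shO C A))"

definition triangulated :: "('o,'m,'k::field) kcat \<Rightarrow> bool" where
  "triangulated C \<longleftrightarrow> additive C \<and> shift_equiv C \<and>
     (\<forall>T\<in>dist C. tri_wf C T) \<and>
     \<comment> \<open>TR1: closed under isomorphisms of triangles\<close>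
     (\<forall>A B D f g h A' B' D' f' g' h' a b c.
        (A, B, D, f, g, h) \<in> dist C \<and> tri_wf C (A', B', D', f', g', h') \<and>
        is_iso C A A' a \<and> is_iso C B B' b \<and> is_iso C D D' c \<and>
        cmp C b f = cmp C f' a \<and> cmp C c g = cmp C g' b \<and> cmp C (shM C a) h = cmp C h' c
        \<longrightarrow> (A', B', D', f', g', h') \<in> dist C) \<and>
     \<comment> \<open>TR1: A -id-> A -> 0 -> A[1] is distinguished for a zero object 0\<close>
     (\<forall>A\<in>Ob C. \<forall>Z\<in>Ob C. (\<forall>X\<in>Ob C. Hom C Z X = {zerom C Z X} \<and> Hom C X Z = {zerom C X Z}) \<longrightarrow>
        (A, A, Z, idm C A, zerom C A Z, zerom C Z (shO C A)) \<in> dist C) \<and>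
     \<comment> \<open>TR1: every morphism extends to a distinguished triangle\<close>
     (\<forall>A\<in>Ob C. \<forall>B\<in>Ob C. \<forall>f\<in>Hom C A B. \<exists>D g h. (A, B, D, f, g, h) \<in> dist C) \<and>
     \<comment> \<open>TR2: rotation\<close>
     (\<forall>A B D f g h. tri_wf C (A, B, D, f, g, h) \<longrightarrow>
        ((A, B, D, f, g, h) \<in> dist C \<longleftrightarrow> (B, D, shO C A, g, h, smul C (-1) (shM C f)) \<in> dist C)) \<and>
     \<comment> \<open>TR3: completion of morphisms of triangles\<close>
     (\<forall>A B D f g h A' B' D' f' g' h' a b.
        (A, B, D, f, g, h) \<in> dist C \<and> (A', B', D', f', g', h') \<in> dist C \<and>
        a \<in> Hom C A A' \<and> b \<in> Hom C B B' \<and> cmp C b f = cmp C f' a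
        \<longrightarrow> (\<exists>c\<in>Hom C D D'. cmp C c g = cmp C g' b \<and> cmp C (shM C a) h = cmp C h' c)) \<and>
     \<comment> \<open>TR4: octahedral axiom\<close>
     (\<forall>X Y Z Z' X' Y' u j k v l i m n.
        (X, Y, Z', u, j, k) \<in> dist C \<and> (Y, Z, X', v, l, i) \<in> dist C \<and>
        (X, Z, Y', cmp C v u, m, n) \<in> dist C
        \<longrightarrow> (\<exists>p q. (Z', Y', X', p, q, cmp C (shM C j) i) \<in> dist C \<and>
               cmp C p j = cmp C m v \<and> cmp C n p = k \<and>
               cmp C q m = l \<and> cmp C i q = cmp C (shM C u) n))"

definition finite_type :: "('o,'m,'k::field) kcat \<Rightarrow> bool" where
  "finite_type C \<longleftrightarrow> (\<forall>A\<in>Ob C. \<forall>B\<in>Ob C.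
     (\<forall>i. \<exists>vs. spans C A ((shO C ^^ i) B) vs) \<and>
     (\<forall>i. \<exists>vs. spans C ((shO C ^^ i) A) B vs) \<and>
     finite {i. Hom C A ((shO C ^^ i) B) \<noteq> {zerom C A ((shO C ^^ i) B)}} \<and>
     finite {i. Hom C ((shO C ^^ i) A) B \<noteq> {zerom C ((shO C ^^ i) A) B}})"

abbreviation sh2 :: "('o,'m,'k) kcat \<Rightarrow> 'o \<Rightarrow> 'o" where
  "sh2 C A \<equiv> shO C (shO C A)"

abbreviation shM2 :: "('o,'m,'k) kcat \<Rightarrow> 'm \<Rightarrow> 'm" where
  "shM2 C f \<equiv> shM C (shM C f)"

text \<open>E \<mapsto> E[2] is a Serre functor: natural isomorphisms
  eta_{E,F} : Hom(E,F) \<rightarrow> Hom(F,E[2])^*, written as pairings P E F f g = eta_{E,F}(f)(g).\<close>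
definition serre_shift2 :: "('o,'m,'k::field) kcat \<Rightarrow> bool" where
  "serre_shift2 C \<longleftrightarrow> (\<exists>P :: 'o \<Rightarrow> 'o \<Rightarrow> 'm \<Rightarrow> 'm \<Rightarrow> 'k.
     (\<forall>E\<in>Ob C. \<forall>F\<in>Ob C.
        \<comment> \<open>eta_{E,F}(f) is linear\<close>
        (\<forall>f\<in>Hom C E F. \<forall>g\<in>Hom C F (sh2 C E). \<forall>g'\<in>Hom C F (sh2 C E). \<forall>c.
            P E F f (addm C g g') = P E F f g + P E F f g' \<and> P E F f (smul C c g) = c * P E F f g) \<and>
        \<comment> \<open>eta_{E,F} is linear\<close>
        (\<forall>f\<in>Hom C E F. \<forall>f'\<in>Hom C E F. \<forall>g\<in>Hom C F (sh2 C E). \<forall>c.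
            P E F (addm C f f') g = P E F f g + P E F f' g \<and> P E F (smul C c f) g = c * P E F f g) \<and>
        \<comment> \<open>eta_{E,F} is injective\<close>
        (\<forall>f\<in>Hom C E F. \<forall>f'\<in>Hom C E F. (\<forall>g\<in>Hom C F (sh2 C E). P E F f g = P E F f' g) \<longrightarrow> f = f') \<and>
        \<comment> \<open>eta_{E,F} is surjective onto the dual space\<close>
        (\<forall>\<phi> :: 'm \<Rightarrow> 'k.
            (\<forall>g\<in>Hom C F (sh2 C E). \<forall>g'\<in>Hom C F (sh2 C E). \<forall>c.
               \<phi> (addm C g g') = \<phi> g + \<phi> g' \<and> \<phi> (smul C c g) = c * \<phi> g)
            \<longrightarrow> (\<exists>f\<in>Hom C E F. \<forall>g\<in>Hom C F (sh2 C E). P E F f g = \<phi> g))) \<and>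
     \<comment> \<open>naturality in E (contravariant) and F (covariant)\<close>
     (\<forall>E\<in>Ob C. \<forall>E'\<in>Ob C. \<forall>F\<in>Ob C. \<forall>F'\<in>Ob C. \<forall>a\<in>Hom C E' E. \<forall>b\<in>Hom C F F'.
        \<forall>f\<in>Hom C E F. \<forall>g\<in>Hom C F' (sh2 C E').
          P E' F' (cmp C b (cmp C f a)) g = P E F f (cmp C (shM2 C a) (cmp C g b))))"

definition K3_category :: "('o,'m,'k::field) kcat \<Rightarrow> bool" where
  "K3_category C \<longleftrightarrow> triangulated C \<and> finite_type C \<and> serre_shift2 C"

text \<open>(E,F)^i = dim Hom(E, F[i]); for negative i this is dim Hom(E[-i], F),
  which is canonically isomorphic since the shift is an equivalence.\<close>
definition ext_dim :: "('o,'m,'k) kcat \<Rightarrow> 'o \<Rightarrow> 'o \<Rightarrow> int \<Rightarrow> nat" where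
  "ext_dim C E F i = (if 0 \<le> i then hdim C E ((shO C ^^ nat i) F)
                      else hdim C ((shO C ^^ nat (- i)) E) F)"

definition spherical :: "('o,'m,'k) kcat \<Rightarrow> 'o \<Rightarrow> bool" where
  "spherical C E \<longleftrightarrow> E \<in> Ob C \<and> ext_dim C E E 0 = 1 \<and> ext_dim C E E 2 = 1 \<and>
     (\<forall>i. i \<noteq> 0 \<and> i \<noteq> 2 \<longrightarrow> ext_dim C E E i = 0)"

end

theory Submission
  imports Defs
begin
locale tc =
  fixes C :: "('o,'m,'k::field) kcat"
  assumes tr: "triangulated C"
begin

lemma kl: "klinear C" using tr unfolding triangulated_def additive_def by blast
lemma cat: "category C" using kl unfolding klinear_def by blast
lemma se: "shift_equiv C" using tr unfolding triangulated_def by blast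

lemma id_hom: "A \<in> Ob C \<Longrightarrow> idm C A \<in> Hom C A A" using cat unfolding category_def by blast
lemma cmp_hom: "A \<in> Ob C \<Longrightarrow> B \<in> Ob C \<Longrightarrow> D \<in> Ob C \<Longrightarrow> f \<in> Hom C A B \<Longrightarrow> g \<in> Hom C B D \<Longrightarrow> cmp C g f \<in> Hom C A D"
  using cat unfolding category_def by blast
lemma id_r: "A \<in> Ob C \<Longrightarrow> B \<in> Ob C \<Longrightarrow> f \<in> Hom C A B \<Longrightarrow> cmp C f (idm C A) = f"
  using cat unfolding category_def by blast
lemma id_l: "A \<in> Ob C \<Longrightarrow> B \<in> Ob C \<Longrightarrow> f \<in> Hom C A B \<Longrightarrow> cmp C (idm C B) f = f"
  using cat unfolding category_def by blast
lemma assoc: "A \<in> Ob C \<Longrightarrow> B \<in> Ob C \<Longrightarrow> D \<in> Ob C \<Longrightarrow> F \<in> Ob C \<Longrightarrow> f \<in> Hom C A B \<Longrightarrow> g \<in> Hom C B D \<Longrightarrow> h \<in> Hom C D F \<Longrightarrow>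
   cmp C h (cmp C g f) = cmp C (cmp C h g) f"
  using cat unfolding category_def by blast

lemma klAB: assumes "A \<in> Ob C" "B \<in> Ob C" shows
  "zerom C A B \<in> Hom C A B \<and>
        (\<forall>f\<in>Hom C A B. \<forall>g\<in>Hom C A B. addm C f g \<in> Hom C A B) \<and>
        (\<forall>c. \<forall>f\<in>Hom C A B. smul C c f \<in> Hom C A B) \<and>
        (\<forall>f\<in>Hom C A B. \<forall>g\<in>Hom C A B. \<forall>h\<in>Hom C A B. addm C (addm C f g) h = addm C f (addm C g h)) \<and>
        (\<forall>f\<in>Hom C A B. \<forall>g\<in>Hom C A B. addm C f g = addm C g f) \<and>
        (\<forall>f\<in>Hom C A B. addm C (zerom C A B) f = f) \<and>
        (\<forall>f\<in>Hom C A B. \<exists>g\<in>Hom C A B. addm C f g = zerom C A B) \<and>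
        (\<forall>c. \<forall>f\<in>Hom C A B. \<forall>g\<in>Hom C A B. smul C c (addm C f g) = addm C (smul C c f) (smul C c g)) \<and>
        (\<forall>a b. \<forall>f\<in>Hom C A B. smul C (a + b) f = addm C (smul C a f) (smul C b f)) \<and>
        (\<forall>a b. \<forall>f\<in>Hom C A B. smul C (a * b) f = smul C a (smul C b f)) \<and>
        (\<forall>f\<in>Hom C A B. smul C 1 f = f)"
proof -
  have "\<forall>A\<in>Ob C. \<forall>B\<in>Ob C.
        zerom C A B \<in> Hom C A B \<and>
        (\<forall>f\<in>Hom C A B. \<forall>g\<in>Hom C A B. addm C f g \<in> Hom C A B) \<and>
        (\<forall>c. \<forall>f\<in>Hom C A B. smul C c f \<in> Hom C A B) \<and>
        (\<forall>f\<in>Hom C A B. \<forall>g\<in>Hom C A B. \<forall>h\<in>Hom C A B. addm C (addm C f g) h = addm C f (addm C g h)) \<and>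
        (\<forall>f\<in>Hom C A B. \<forall>g\<in>Hom C A B. addm C f g = addm C g f) \<and>
        (\<forall>f\<in>Hom C A B. addm C (zerom C A B) f = f) \<and>
        (\<forall>f\<in>Hom C A B. \<exists>g\<in>Hom C A B. addm C f g = zerom C A B) \<and>
        (\<forall>c. \<forall>f\<in>Hom C A B. \<forall>g\<in>Hom C A B. smul C c (addm C f g) = addm C (smul C c f) (smul C c g)) \<and>
        (\<forall>a b. \<forall>f\<in>Hom C A B. smul C (a + b) f = addm C (smul C a f) (smul C b f)) \<and>
        (\<forall>a b. \<forall>f\<in>Hom C A B. smul C (a * b) f = smul C a (smul C b f)) \<and>
        (\<forall>f\<in>Hom C A B. smul C 1 f = f)" using kl unfolding klinear_def by (elim conjE)
  from bspec[OF bspec[OF this assms(1)] assms(2)] show ?thesis .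
qed

context fixes A B assumes AB: "A \<in> Ob C" "B \<in> Ob C"
begin
lemma zero_hom: "zerom C A B \<in> Hom C A B" using klAB[OF AB] by auto
lemma add_hom: "f \<in> Hom C A B \<Longrightarrow> g \<in> Hom C A B \<Longrightarrow> addm C f g \<in> Hom C A B" using klAB[OF AB] by auto
lemma smul_hom: "f \<in> Hom C A B \<Longrightarrow> smul C c f \<in> Hom C A B" using klAB[OF AB] by auto
lemma add_assoc: "f \<in> Hom C A B \<Longrightarrow> g \<in> Hom C A B \<Longrightarrow> h \<in> Hom C A B \<Longrightarrow> addm C (addm C f g) h = addm C f (addm C g h)"
  using klAB[OF AB] by auto
lemma add_comm: "f \<in> Hom C A B \<Longrightarrow> g \<in> Hom C A B \<Longrightarrow> addm C f g = addm C g f"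
  using klAB[OF AB] by auto
lemma zero_add: "f \<in> Hom C A B \<Longrightarrow> addm C (zerom C A B) f = f"
  using klAB[OF AB] by auto
lemma add_inv: "f \<in> Hom C A B \<Longrightarrow> \<exists>g\<in>Hom C A B. addm C f g = zerom C A B"
  using klAB[OF AB] by (elim conjE) blast
lemma smul_add: "f \<in> Hom C A B \<Longrightarrow> g \<in> Hom C A B \<Longrightarrow> smul C c (addm C f g) = addm C (smul C c f) (smul C c g)"
  using klAB[OF AB] by auto
lemma add_smul: "f \<in> Hom C A B \<Longrightarrow> smul C (a + b) f = addm C (smul C a f) (smul C b f)"
  using klAB[OF AB] by auto
lemma smul_smul: "f \<in> Hom C A B \<Longrightarrow> smul C (a * b) f = smul C a (smul C b f)"
  using klAB[OF AB] by auto
lemma one_smul: "f \<in> Hom C A B \<Longrightarrow> smul C 1 f = f"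
  using klAB[OF AB] by auto

lemma add_zero: "f \<in> Hom C A B \<Longrightarrow> addm C f (zerom C A B) = f"
  using add_comm zero_add zero_hom by metis

lemma self_add: assumes x: "x \<in> Hom C A B" and e: "addm C x x = x" shows "x = zerom C A B"
proof -
  obtain y where y: "y \<in> Hom C A B" "addm C x y = zerom C A B" using add_inv x by blast
  have "zerom C A B = addm C (addm C x x) y" using e y by simp
  also have "\<dots> = addm C x (addm C x y)" using add_assoc x y by blast
  also have "\<dots> = x" using y add_zero x by simp
  finally show ?thesis by simp
qed

lemma zero_smul: "f \<in> Hom C A B \<Longrightarrow> smul C 0 f = zerom C A B"
  by (metis add_0 add_smul self_add smul_hom)

lemma smul_zero: "smul C c (zerom C A B) = zerom C A B"
  by (metis zero_hom zero_add smul_add self_add smul_hom)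

lemma neg_cancel: "f \<in> Hom C A B \<Longrightarrow> addm C f (smul C (-1) f) = zerom C A B"
proof -
  assume f: "f \<in> Hom C A B"
  have "addm C f (smul C (-1) f) = addm C (smul C 1 f) (smul C (-1) f)" using one_smul f by simp
  also have "\<dots> = smul C (1 + -1) f" by (rule add_smul[OF f, symmetric])
  also have "\<dots> = smul C 0 f" by simp
  also have "\<dots> = zerom C A B" using zero_smul f by blast
  finally show ?thesis .
qed

lemma negneg: "f \<in> Hom C A B \<Longrightarrow> smul C (-1) (smul C (-1) f) = f"
  by (metis smul_smul one_smul mult_minus1 minus_minus)

lemma eq_of_sub: assumes x: "x \<in> Hom C A B" and y: "y \<in> Hom C A B"
  and e: "addm C x (smul C (-1) y) = zerom C A B" shows "x = y"
proof -
  have "y = addm C (zerom C A B) y" using zero_add y by simp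
  also have "\<dots> = addm C (addm C x (smul C (-1) y)) y" using e by simp
  also have "\<dots> = addm C x (addm C (smul C (-1) y) y)" using add_assoc x y smul_hom by blast
  also have "\<dots> = addm C x (zerom C A B)" using add_comm neg_cancel y smul_hom by metis
  also have "\<dots> = x" using add_zero x by simp
  finally show ?thesis by simp
qed

lemma neg_inj: "x \<in> Hom C A B \<Longrightarrow> y \<in> Hom C A B \<Longrightarrow> smul C (-1) x = smul C (-1) y \<Longrightarrow> x = y"
  by (metis negneg)

lemma neg_nz: "x \<in> Hom C A B \<Longrightarrow> x \<noteq> zerom C A B \<Longrightarrow> smul C (-1) x \<noteq> zerom C A B"
  by (metis negneg smul_zero)

lemma smul_nz: "x \<in> Hom C A B \<Longrightarrow> smul C c x = zerom C A B \<Longrightarrow> c \<noteq> 0 \<Longrightarrow> x = zerom C A B"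
  by (metis smul_smul smul_zero one_smul field_class.field_inverse)
end

lemma klC: assumes "A \<in> Ob C" "B \<in> Ob C" "D \<in> Ob C" "f \<in> Hom C A B" "f' \<in> Hom C A B" "g \<in> Hom C B D" "g' \<in> Hom C B D"
  shows "cmp C g (addm C f f') = addm C (cmp C g f) (cmp C g f') \<and>
        cmp C (addm C g g') f = addm C (cmp C g f) (cmp C g' f) \<and>
        cmp C g (smul C c f) = smul C c (cmp C g f) \<and>
        cmp C (smul C c g) f = smul C c (cmp C g f)"
proof -
  have "\<forall>A\<in>Ob C. \<forall>B\<in>Ob C. \<forall>D\<in>Ob C. \<forall>f\<in>Hom C A B. \<forall>f'\<in>Hom C A B. \<forall>g\<in>Hom C B D. \<forall>g'\<in>Hom C B D. \<forall>c.
        cmp C g (addm C f f') = addm C (cmp C g f) (cmp C g f') \<and>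
        cmp C (addm C g g') f = addm C (cmp C g f) (cmp C g' f) \<and>
        cmp C g (smul C c f) = smul C c (cmp C g f) \<and>
        cmp C (smul C c g) f = smul C c (cmp C g f)" using kl unfolding klinear_def by (elim conjE)
  then show ?thesis using assms by blast
qed

lemma cmp_add_r: "A \<in> Ob C \<Longrightarrow> B \<in> Ob C \<Longrightarrow> D \<in> Ob C \<Longrightarrow> f \<in> Hom C A B \<Longrightarrow> f' \<in> Hom C A B \<Longrightarrow> g \<in> Hom C B D \<Longrightarrow>
  cmp C g (addm C f f') = addm C (cmp C g f) (cmp C g f')"
  using klC by blast
lemma cmp_add_l: "A \<in> Ob C \<Longrightarrow> B \<in> Ob C \<Longrightarrow> D \<in> Ob C \<Longrightarrow> f \<in> Hom C A B \<Longrightarrow> g \<in> Hom C B D \<Longrightarrow> g' \<in> Hom C B D \<Longrightarrow>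
  cmp C (addm C g g') f = addm C (cmp C g f) (cmp C g' f)"
  using klC by blast
lemma cmp_smul_r: "A \<in> Ob C \<Longrightarrow> B \<in> Ob C \<Longrightarrow> D \<in> Ob C \<Longrightarrow> f \<in> Hom C A B \<Longrightarrow> g \<in> Hom C B D \<Longrightarrow>
  cmp C g (smul C c f) = smul C c (cmp C g f)"
  using klC by blast
lemma cmp_smul_l: "A \<in> Ob C \<Longrightarrow> B \<in> Ob C \<Longrightarrow> D \<in> Ob C \<Longrightarrow> f \<in> Hom C A B \<Longrightarrow> g \<in> Hom C B D \<Longrightarrow>
  cmp C (smul C c g) f = smul C c (cmp C g f)"
  using klC by blast

lemma cmp_zero_r: assumes "A \<in> Ob C" "B \<in> Ob C" "D \<in> Ob C" "g \<in> Hom C B D"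
  shows "cmp C g (zerom C A B) = zerom C A D"
proof -
  have z: "zerom C A B \<in> Hom C A B" using zero_hom assms by blast
  have "cmp C g (zerom C A B) = cmp C g (addm C (zerom C A B) (zerom C A B))"
    using zero_add[OF assms(1,2) z] by simp
  also have "\<dots> = addm C (cmp C g (zerom C A B)) (cmp C g (zerom C A B))"
    using cmp_add_r assms z by blast
  finally show ?thesis using self_add[OF assms(1,3)] cmp_hom assms z by metis
qed

lemma cmp_zero_l: assumes "A \<in> Ob C" "B \<in> Ob C" "D \<in> Ob C" "f \<in> Hom C A B"
  shows "cmp C (zerom C B D) f = zerom C A D"
proof -
  have z: "zerom C B D \<in> Hom C B D" using zero_hom assms by blast
  have "cmp C (zerom C B D) f = cmp C (addm C (zerom C B D) (zerom C B D)) f"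
    using zero_add[OF assms(2,3) z] by simp
  also have "\<dots> = addm C (cmp C (zerom C B D) f) (cmp C (zerom C B D) f)"
    using cmp_add_l assms z by blast
  finally show ?thesis using self_add[OF assms(1,3)] cmp_hom assms z by metis
qed

lemma sh_ob: "A \<in> Ob C \<Longrightarrow> shO C A \<in> Ob C" using se unfolding shift_equiv_def by blast
lemma sh_hom: "A \<in> Ob C \<Longrightarrow> B \<in> Ob C \<Longrightarrow> f \<in> Hom C A B \<Longrightarrow> shM C f \<in> Hom C (shO C A) (shO C B)"
  using se unfolding shift_equiv_def by blast
lemma sh_id: "A \<in> Ob C \<Longrightarrow> shM C (idm C A) = idm C (shO C A)" using se unfolding shift_equiv_def by blast
lemma sh_cmp: "A \<in> Ob C \<Longrightarrow> B \<in> Ob C \<Longrightarrow> D \<in> Ob C \<Longrightarrow> f \<in> Hom C A B \<Longrightarrow> g \<in> Hom C B D \<Longrightarrow>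
   shM C (cmp C g f) = cmp C (shM C g) (shM C f)" using se unfolding shift_equiv_def by blast
lemma sh_add: "A \<in> Ob C \<Longrightarrow> B \<in> Ob C \<Longrightarrow> f \<in> Hom C A B \<Longrightarrow> g \<in> Hom C A B \<Longrightarrow> shM C (addm C f g) = addm C (shM C f) (shM C g)"
  using se unfolding shift_equiv_def by blast
lemma sh_smul: "A \<in> Ob C \<Longrightarrow> B \<in> Ob C \<Longrightarrow> f \<in> Hom C A B \<Longrightarrow> shM C (smul C c f) = smul C c (shM C f)"
  using se unfolding shift_equiv_def by blast
lemma sh_bij: "A \<in> Ob C \<Longrightarrow> B \<in> Ob C \<Longrightarrow> bij_betw (shM C) (Hom C A B) (Hom C (shO C A) (shO C B))"
  using se unfolding shift_equiv_def by blast
lemma sh_ess: "B \<in> Ob C \<Longrightarrow> \<exists>A\<in>Ob C. iso_obj C (shO C A) B"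
  using se unfolding shift_equiv_def by blast
lemma sh_inj: "A \<in> Ob C \<Longrightarrow> B \<in> Ob C \<Longrightarrow> f \<in> Hom C A B \<Longrightarrow> g \<in> Hom C A B \<Longrightarrow> shM C f = shM C g \<Longrightarrow> f = g"
  using sh_bij unfolding bij_betw_def inj_on_def by blast
lemma sh_surj: "A \<in> Ob C \<Longrightarrow> B \<in> Ob C \<Longrightarrow> y \<in> Hom C (shO C A) (shO C B) \<Longrightarrow> \<exists>x\<in>Hom C A B. y = shM C x"
  using sh_bij unfolding bij_betw_def by blast
lemma sh_zero: "A \<in> Ob C \<Longrightarrow> B \<in> Ob C \<Longrightarrow> shM C (zerom C A B) = zerom C (shO C A) (shO C B)"
  by (metis sh_add zero_hom zero_add self_add sh_hom sh_ob)
lemma sh_nz: "A \<in> Ob C \<Longrightarrow> B \<in> Ob C \<Longrightarrow> f \<in> Hom C A B \<Longrightarrow> f \<noteq> zerom C A B \<Longrightarrow> shM C f \<noteq> zerom C (shO C A) (shO C B)"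
  by (metis sh_zero sh_inj zero_hom)

lemma shn_ob: "A \<in> Ob C \<Longrightarrow> (shO C ^^ n) A \<in> Ob C"
  by (induction n) (auto simp: sh_ob)

end

context tc begin

definition isZ :: "'o \<Rightarrow> bool" where
  "isZ Z \<longleftrightarrow> Z \<in> Ob C \<and> (\<forall>X\<in>Ob C. Hom C Z X = {zerom C Z X} \<and> Hom C X Z = {zerom C X Z})"

lemma zero_ex: "\<exists>Z. isZ Z"
proof -
  have ad: "additive C" using tr unfolding triangulated_def by (elim conjE)
  have "\<exists>Z\<in>Ob C. \<forall>A\<in>Ob C. Hom C Z A = {zerom C Z A} \<and> Hom C A Z = {zerom C A Z}"
    using ad unfolding additive_def by (elim conjE)
  then show ?thesis unfolding isZ_def by blast
qed

lemma dist_wf: "(A,B,D,f,g,h) \<in> dist C \<Longrightarrow>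
  A \<in> Ob C \<and> B \<in> Ob C \<and> D \<in> Ob C \<and> f \<in> Hom C A B \<and> g \<in> Hom C B D \<and> h \<in> Hom C D (shO C A)"
proof -
  assume a: "(A,B,D,f,g,h) \<in> dist C"
  have "\<forall>T\<in>dist C. tri_wf C T" using tr unfolding triangulated_def by (elim conjE)
  then have "tri_wf C (A,B,D,f,g,h)" using a by blast
  then show ?thesis unfolding tri_wf_def by simp
qed

lemma TR1z: "A \<in> Ob C \<Longrightarrow> isZ Z \<Longrightarrow> (A, A, Z, idm C A, zerom C A Z, zerom C Z (shO C A)) \<in> dist C"
proof -
  assume a: "A \<in> Ob C" "isZ Z"
  have "\<forall>A\<in>Ob C. \<forall>Z\<in>Ob C. (\<forall>X\<in>Ob C. Hom C Z X = {zerom C Z X} \<and> Hom C X Z = {zerom C X Z}) \<longrightarrow>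
        (A, A, Z, idm C A, zerom C A Z, zerom C Z (shO C A)) \<in> dist C"
    using tr unfolding triangulated_def by (elim conjE)
  then show ?thesis using a unfolding isZ_def by blast
qed

lemma TR2: assumes "tri_wf C (A, B, D, f, g, h)"
  shows "(A, B, D, f, g, h) \<in> dist C \<longleftrightarrow> (B, D, shO C A, g, h, smul C (-1) (shM C f)) \<in> dist C"
proof -
  have "\<forall>A B D f g h. tri_wf C (A, B, D, f, g, h) \<longrightarrow>
        ((A, B, D, f, g, h) \<in> dist C \<longleftrightarrow> (B, D, shO C A, g, h, smul C (-1) (shM C f)) \<in> dist C)"
    using tr unfolding triangulated_def by (elim conjE)
  then show ?thesis using assms by blast
qed

lemma TR3: assumes "(A, B, D, f, g, h) \<in> dist C" "(A', B', D', f', g', h') \<in> dist C"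
   "a \<in> Hom C A A'" "b \<in> Hom C B B'" "cmp C b f = cmp C f' a"
 shows "\<exists>c\<in>Hom C D D'. cmp C c g = cmp C g' b \<and> cmp C (shM C a) h = cmp C h' c"
proof -
  have "\<forall>A B D f g h A' B' D' f' g' h' a b.
        (A, B, D, f, g, h) \<in> dist C \<and> (A', B', D', f', g', h') \<in> dist C \<and>
        a \<in> Hom C A A' \<and> b \<in> Hom C B B' \<and> cmp C b f = cmp C f' a
        \<longrightarrow> (\<exists>c\<in>Hom C D D'. cmp C c g = cmp C g' b \<and> cmp C (shM C a) h = cmp C h' c)"
    using tr unfolding triangulated_def by (elim conjE)
  then show ?thesis using assms by blast
qed

lemma rot: "(A, B, D, f, g, h) \<in> dist C \<Longrightarrow> (B, D, shO C A, g, h, smul C (-1) (shM C f)) \<in> dist C"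
proof -
  assume a: "(A, B, D, f, g, h) \<in> dist C"
  have "tri_wf C (A, B, D, f, g, h)" using dist_wf[OF a] unfolding tri_wf_def by simp
  then show ?thesis using TR2 a by blast
qed

lemma tsh: assumes "(A, B, D, f, g, h) \<in> dist C"
  shows "(shO C A, shO C B, shO C D, smul C (-1) (shM C f), smul C (-1) (shM C g), smul C (-1) (shM C h)) \<in> dist C"
  using rot[OF rot[OF rot[OF assms]]] .

lemma comp_zero: assumes T: "(A, B, D, f, g, h) \<in> dist C" shows "cmp C g f = zerom C A D"
proof -
  note w = dist_wf[OF T]
  obtain Z where Z: "isZ Z" using zero_ex by blast
  have ZO: "Z \<in> Ob C" using Z unfolding isZ_def by blast
  have T0: "(A, A, Z, idm C A, zerom C A Z, zerom C Z (shO C A)) \<in> dist C" using TR1z Z w by blast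
  obtain c where c: "c \<in> Hom C Z D" "cmp C c (zerom C A Z) = cmp C g f"
    using TR3[OF T0 T id_hom[of A] _ refl] w by blast
  have "c = zerom C Z D" using c Z w unfolding isZ_def by blast
  then show ?thesis using c cmp_zero_l[OF _ ZO, of A D] zero_hom[of A Z] ZO w by simp
qed

lemma comp_zero2: assumes T: "(A, B, D, f, g, h) \<in> dist C" shows "cmp C h g = zerom C B (shO C A)"
  using comp_zero[OF rot[OF T]] .

lemma cov_exact: assumes T: "(A, B, D, f, g, h) \<in> dist C" and W: "W \<in> Ob C"
  and u: "u \<in> Hom C W B" and gu: "cmp C g u = zerom C W D"
  shows "\<exists>v\<in>Hom C W A. u = cmp C f v"
proof -
  note w = dist_wf[OF T]
  obtain Z where Z: "isZ Z" using zero_ex by blast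
  have ZO: "Z \<in> Ob C" using Z unfolding isZ_def by blast
  have T0: "(W, W, Z, idm C W, zerom C W Z, zerom C Z (shO C W)) \<in> dist C" using TR1z Z W by blast
  have R0: "(W, Z, shO C W, zerom C W Z, zerom C Z (shO C W), smul C (-1) (shM C (idm C W))) \<in> dist C"
    using rot[OF T0] .
  have R1: "(B, D, shO C A, g, h, smul C (-1) (shM C f)) \<in> dist C" using rot[OF T] .
  have cond: "cmp C (zerom C Z D) (zerom C W Z) = cmp C g u"
    using gu cmp_zero_l[OF W ZO, of D] zero_hom W ZO w by simp
  obtain c where c: "c \<in> Hom C (shO C W) (shO C A)"
    "cmp C (shM C u) (smul C (-1) (shM C (idm C W))) = cmp C (smul C (-1) (shM C f)) c"
    using TR3[OF R0 R1 u zero_hom[OF ZO] cond] w by blast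
  have W1: "shO C W \<in> Ob C" and A1: "shO C A \<in> Ob C" and B1: "shO C B \<in> Ob C" using sh_ob W w by auto
  have su: "shM C u \<in> Hom C (shO C W) (shO C B)" using sh_hom u W w by blast
  have sf: "shM C f \<in> Hom C (shO C A) (shO C B)" using sh_hom w by blast
  have "cmp C (shM C u) (smul C (-1) (shM C (idm C W))) = smul C (-1) (shM C u)"
    using cmp_smul_r[OF W1 W1 B1 id_hom[OF W1] su] id_r[OF W1 B1 su] sh_id[OF W] by simp
  moreover have "cmp C (smul C (-1) (shM C f)) c = smul C (-1) (cmp C (shM C f) c)"
    using cmp_smul_l[OF W1 A1 B1 c(1) sf] .
  ultimately have "shM C u = cmp C (shM C f) c"
    using c(2) neg_inj[OF W1 B1] su cmp_hom[OF W1 A1 B1 c(1) sf] by metis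
  obtain v where v: "v \<in> Hom C W A" "c = shM C v" using sh_surj[OF W _ c(1)] w by blast
  have "shM C u = shM C (cmp C f v)" using sh_cmp[OF W _ _ v(1), of B f] w v \<open>shM C u = _\<close> by simp
  then have "u = cmp C f v" using sh_inj[OF W _ u, of "cmp C f v"] cmp_hom[OF W _ _ v(1), of B f] w by simp
  then show ?thesis using v by blast
qed

lemma isZ_sh: assumes Z: "isZ Z" shows "isZ (shO C Z)"
proof -
  have ZO: "Z \<in> Ob C" using Z unfolding isZ_def by blast
  have Z1: "shO C Z \<in> Ob C" using sh_ob ZO by blast
  have "Hom C (shO C Z) X = {zerom C (shO C Z) X} \<and> Hom C X (shO C Z) = {zerom C X (shO C Z)}" if X: "X \<in> Ob C" for X
  proof -
    obtain Y where Y: "Y \<in> Ob C" "iso_obj C (shO C Y) X" using sh_ess X by blast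
    have Y1: "shO C Y \<in> Ob C" using sh_ob Y by blast
    obtain p q where pq: "p \<in> Hom C (shO C Y) X" "q \<in> Hom C X (shO C Y)"
      "cmp C q p = idm C (shO C Y)" "cmp C p q = idm C X" using Y unfolding iso_obj_def by blast
    have a: "t = zerom C (shO C Z) X" if t: "t \<in> Hom C (shO C Z) X" for t
    proof -
      have qt: "cmp C q t \<in> Hom C (shO C Z) (shO C Y)" using cmp_hom Z1 X Y1 t pq by blast
      obtain s where s: "s \<in> Hom C Z Y" "cmp C q t = shM C s" using sh_surj[OF ZO Y(1) qt] by blast
      have "s = zerom C Z Y" using s Z Y unfolding isZ_def by blast
      then have "cmp C q t = zerom C (shO C Z) (shO C Y)" using s sh_zero ZO Y by simp
      moreover have "t = cmp C p (cmp C q t)" using assoc[OF Z1 X Y1 X t pq(2) pq(1)] pq id_l[OF Z1 X t] by simp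
      ultimately show ?thesis using cmp_zero_r[OF Z1 Y1 X pq(1)] by simp
    qed
    have b: "t = zerom C X (shO C Z)" if t: "t \<in> Hom C X (shO C Z)" for t
    proof -
      have tp: "cmp C t p \<in> Hom C (shO C Y) (shO C Z)" using cmp_hom Z1 X Y1 t pq by blast
      obtain s where s: "s \<in> Hom C Y Z" "cmp C t p = shM C s" using sh_surj[OF Y(1) ZO tp] by blast
      have "s = zerom C Y Z" using s Z Y unfolding isZ_def by blast
      then have "cmp C t p = zerom C (shO C Y) (shO C Z)" using s sh_zero ZO Y by simp
      moreover have "t = cmp C (cmp C t p) q" using assoc[OF X Y1 X Z1 pq(2) pq(1) t] pq id_r[OF X Z1 t] by simp
      ultimately show ?thesis using cmp_zero_l[OF X Y1 Z1 pq(2)] by simp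
    qed
    show ?thesis using a b zero_hom Z1 X by blast
  qed
  then show ?thesis unfolding isZ_def using Z1 by blast
qed

lemma contra_exact: assumes T: "(A, B, D, f, g, h) \<in> dist C" and W: "W \<in> Ob C"
  and x: "x \<in> Hom C B W" and xf: "cmp C x f = zerom C A W"
  shows "\<exists>y\<in>Hom C D W. x = cmp C y g"
proof -
  note w = dist_wf[OF T]
  obtain Z where Z: "isZ Z" using zero_ex by blast
  have ZO: "Z \<in> Ob C" using Z unfolding isZ_def by blast
  have Z1: "isZ (shO C Z)" using isZ_sh Z by blast
  have Z1O: "shO C Z \<in> Ob C" using sh_ob ZO by blast
  have W1: "shO C W \<in> Ob C" using sh_ob W by blast
  have T0: "(W, W, shO C Z, idm C W, zerom C W (shO C Z), zerom C (shO C Z) (shO C W)) \<in> dist C"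
    using TR1z Z1 W by blast
  have e: "smul C (-1) (shM C (zerom C Z W)) = zerom C (shO C Z) (shO C W)"
    using sh_zero[OF ZO W] smul_zero[OF Z1O W1] by simp
  have wf: "tri_wf C (Z, W, W, zerom C Z W, idm C W, zerom C W (shO C Z))"
    unfolding tri_wf_def using ZO W zero_hom id_hom Z1O by auto
  have T1: "(Z, W, W, zerom C Z W, idm C W, zerom C W (shO C Z)) \<in> dist C"
    using TR2[OF wf] T0 e by simp
  have cond: "cmp C x f = cmp C (zerom C Z W) (zerom C A Z)"
    using xf cmp_zero_l[OF _ ZO W, of A] zero_hom w ZO by simp
  obtain c where c: "c \<in> Hom C D W" "cmp C c g = cmp C (idm C W) x"
    using TR3[OF T T1 zero_hom[OF _ ZO] x cond] w by blast
  then show ?thesis using id_l[OF _ W x] w by auto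
qed

end

context tc begin

definition One :: "'o \<Rightarrow> 'o \<Rightarrow> bool" where
  "One X Y \<longleftrightarrow> (\<exists>v\<in>Hom C X Y. v \<noteq> zerom C X Y \<and> (\<forall>x\<in>Hom C X Y. \<exists>c. x = smul C c v))"

definition Zr :: "'o \<Rightarrow> 'o \<Rightarrow> bool" where
  "Zr X Y \<longleftrightarrow> Hom C X Y \<subseteq> {zerom C X Y}"

definition dd :: "'o \<Rightarrow> 'o \<Rightarrow> bool \<Rightarrow> bool" where
  "dd X Y b \<longleftrightarrow> (if b then One X Y else Zr X Y)"

lemma inj_from_ker:
  assumes O: "X \<in> Ob C" "Y \<in> Ob C" "X' \<in> Ob C" "Y' \<in> Ob C"
  and into: "\<forall>x\<in>Hom C X Y. \<phi> x \<in> Hom C X' Y'"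
  and add: "\<forall>x\<in>Hom C X Y. \<forall>y\<in>Hom C X Y. \<phi> (addm C x y) = addm C (\<phi> x) (\<phi> y)"
  and hom: "\<forall>x\<in>Hom C X Y. \<forall>c. \<phi> (smul C c x) = smul C c (\<phi> x)"
  and ker: "\<forall>x\<in>Hom C X Y. \<phi> x = zerom C X' Y' \<longrightarrow> x = zerom C X Y"
  shows "inj_on \<phi> (Hom C X Y)"
proof (rule inj_onI)
  fix a b assume a: "a \<in> Hom C X Y" and b: "b \<in> Hom C X Y" and e: "\<phi> a = \<phi> b"
  have nb: "smul C (-1) b \<in> Hom C X Y" using smul_hom O b by blast
  have d: "addm C a (smul C (-1) b) \<in> Hom C X Y" using add_hom O a nb by blast
  have "\<phi> (addm C a (smul C (-1) b)) = addm C (\<phi> a) (smul C (-1) (\<phi> b))"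
    using add hom a nb b by simp
  also have "\<dots> = zerom C X' Y'" using e neg_cancel[OF O(3,4)] into a b by simp
  finally have "addm C a (smul C (-1) b) = zerom C X Y" using ker d by blast
  then show "a = b" using eq_of_sub[OF O(1,2) a b] by blast
qed

lemma transfer:
  assumes O: "X \<in> Ob C" "Y \<in> Ob C" "X' \<in> Ob C" "Y' \<in> Ob C"
  and img: "\<phi> ` Hom C X Y = Hom C X' Y'"
  and inj: "inj_on \<phi> (Hom C X Y)"
  and hom: "\<forall>x\<in>Hom C X Y. \<forall>c. \<phi> (smul C c x) = smul C c (\<phi> x)"
  shows "dd X Y b \<longleftrightarrow> dd X' Y' b"
proof -
  have z: "zerom C X Y \<in> Hom C X Y" using zero_hom O by blast
  have pz: "\<phi> (zerom C X Y) = zerom C X' Y'"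
  proof -
    have "\<phi> (zerom C X Y) = \<phi> (smul C 0 (zerom C X Y))" using zero_smul[OF O(1,2) z] by simp
    also have "\<dots> = smul C 0 (\<phi> (zerom C X Y))" using hom z by blast
    also have "\<dots> = zerom C X' Y'" using zero_smul[OF O(3,4)] img z by blast
    finally show ?thesis .
  qed
  have kz: "x \<in> Hom C X Y \<Longrightarrow> \<phi> x = zerom C X' Y' \<Longrightarrow> x = zerom C X Y" for x
    using inj pz z unfolding inj_on_def by metis
  have Z: "Zr X Y \<longleftrightarrow> Zr X' Y'"
  proof
    assume zz: "Zr X Y"
    show "Zr X' Y'" unfolding Zr_def
    proof
      fix x assume "x \<in> Hom C X' Y'"
      then obtain y where "y \<in> Hom C X Y" "x = \<phi> y" using img by blast
      then show "x \<in> {zerom C X' Y'}" using zz pz unfolding Zr_def by blast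
    qed
  next
    assume "Zr X' Y'" then show "Zr X Y" unfolding Zr_def using img kz by blast
  qed
  have I: "One X Y \<longleftrightarrow> One X' Y'"
  proof
    assume "One X Y"
    then obtain v where v: "v \<in> Hom C X Y" "v \<noteq> zerom C X Y" "\<forall>x\<in>Hom C X Y. \<exists>c. x = smul C c v"
      unfolding One_def by blast
    have "\<phi> v \<in> Hom C X' Y'" using img v by blast
    moreover have "\<phi> v \<noteq> zerom C X' Y'" using kz v by blast
    moreover have "\<forall>y\<in>Hom C X' Y'. \<exists>c. y = smul C c (\<phi> v)"
    proof
      fix y assume "y \<in> Hom C X' Y'"
      then obtain x where x: "x \<in> Hom C X Y" "y = \<phi> x" using img by blast
      then obtain c where "x = smul C c v" using v by blast
      then show "\<exists>c. y = smul C c (\<phi> v)" using x hom v by blast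
    qed
    ultimately show "One X' Y'" unfolding One_def by blast
  next
    assume "One X' Y'"
    then obtain w where w: "w \<in> Hom C X' Y'" "w \<noteq> zerom C X' Y'" "\<forall>x\<in>Hom C X' Y'. \<exists>c. x = smul C c w"
      unfolding One_def by blast
    obtain v where v: "v \<in> Hom C X Y" "w = \<phi> v" using img w by blast
    have "v \<noteq> zerom C X Y" using v w pz by blast
    moreover have "\<forall>x\<in>Hom C X Y. \<exists>c. x = smul C c v"
    proof
      fix x assume x: "x \<in> Hom C X Y"
      then have "\<phi> x \<in> Hom C X' Y'" using img by blast
      then obtain c where c: "\<phi> x = smul C c w" using w by blast
      have "\<phi> x = \<phi> (smul C c v)" using c v hom by simp
      moreover have "smul C c v \<in> Hom C X Y" using smul_hom O v by blast
      ultimately have "x = smul C c v" using inj x unfolding inj_on_def by blast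
      then show "\<exists>c. x = smul C c v" by blast
    qed
    ultimately show "One X Y" unfolding One_def using v by blast
  qed
  show ?thesis unfolding dd_def using Z I by simp
qed

lemma post_lin:
  assumes O: "W \<in> Ob C" "A \<in> Ob C" "B \<in> Ob C" and f: "f \<in> Hom C A B"
  and ker: "\<forall>u\<in>Hom C W A. cmp C f u = zerom C W B \<longrightarrow> u = zerom C W A"
  and surj: "\<forall>y\<in>Hom C W B. \<exists>u\<in>Hom C W A. y = cmp C f u"
  shows "dd W A b \<longleftrightarrow> dd W B b"
proof (rule transfer[OF O(1,2) O(1,3), of "cmp C f"])
  show "cmp C f ` Hom C W A = Hom C W B" using surj cmp_hom[OF O _ f] by blast
  show "\<forall>x\<in>Hom C W A. \<forall>c. cmp C f (smul C c x) = smul C c (cmp C f x)" using cmp_smul_r[OF O _ f] by blast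
  show "inj_on (cmp C f) (Hom C W A)"
    apply (rule inj_from_ker[OF O(1,2) O(1,3)])
    using cmp_hom[OF O _ f] cmp_add_r[OF O _ _ f] cmp_smul_r[OF O _ f] ker by auto
qed

lemma pre_lin:
  assumes O: "A \<in> Ob C" "B \<in> Ob C" "W \<in> Ob C" and f: "f \<in> Hom C A B"
  and ker: "\<forall>x\<in>Hom C B W. cmp C x f = zerom C A W \<longrightarrow> x = zerom C B W"
  and surj: "\<forall>y\<in>Hom C A W. \<exists>x\<in>Hom C B W. y = cmp C x f"
  shows "dd B W b \<longleftrightarrow> dd A W b"
proof (rule transfer[OF O(2,3) O(1,3), of "\<lambda>x. cmp C x f"])
  show "(\<lambda>x. cmp C x f) ` Hom C B W = Hom C A W" using surj cmp_hom[OF O f] by blast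
  show "\<forall>x\<in>Hom C B W. \<forall>c. cmp C (smul C c x) f = smul C c (cmp C x f)" using cmp_smul_l[OF O f] by blast
  show "inj_on (\<lambda>x. cmp C x f) (Hom C B W)"
    apply (rule inj_from_ker[OF O(2,3) O(1,3)])
    using cmp_hom[OF O f] cmp_add_l[OF O f] cmp_smul_l[OF O f] ker by auto
qed

lemma sh_dd: assumes "X \<in> Ob C" "Y \<in> Ob C" shows "dd X Y b \<longleftrightarrow> dd (shO C X) (shO C Y) b"
  apply (rule transfer)
  using assms sh_ob sh_bij[OF assms] sh_smul[OF assms] unfolding bij_betw_def by auto

lemma one_mult: assumes O: "X \<in> Ob C" "Y \<in> Ob C" and one: "One X Y" and g: "g \<in> Hom C X Y" "g \<noteq> zerom C X Y"
  and v: "v \<in> Hom C X Y" shows "\<exists>c. v = smul C c g"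
proof -
  obtain w where w: "w \<in> Hom C X Y" "w \<noteq> zerom C X Y" "\<forall>x\<in>Hom C X Y. \<exists>c. x = smul C c w"
    using one unfolding One_def by blast
  obtain a where a: "g = smul C a w" using w g by blast
  obtain b where b: "v = smul C b w" using w v by blast
  have a0: "a \<noteq> 0" using a g zero_smul[OF O w(1)] by auto
  have "smul C (b / a) g = smul C ((b / a) * a) w" using a smul_smul[OF O w(1), symmetric] by simp
  also have "(b / a) * a = b" using a0 by simp
  finally show ?thesis using b by metis
qed

lemma one_id: assumes O: "X \<in> Ob C" and one: "One X X" and s: "s \<in> Hom C X X"
  shows "\<exists>c. s = smul C c (idm C X)"
proof -
  have "idm C X \<noteq> zerom C X X"
  proof
    assume z: "idm C X = zerom C X X"
    obtain w where w: "w \<in> Hom C X X" "w \<noteq> zerom C X X" using one unfolding One_def by blast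
    have "w = cmp C w (idm C X)" using id_r[OF O O w(1)] by simp
    also have "\<dots> = zerom C X X" using z cmp_zero_r[OF O O O w(1)] by simp
    finally show False using w by blast
  qed
  then show ?thesis using one_mult[OF O O one id_hom[OF O] _ s] by blast
qed

lemma zr_mem: "Zr X Y \<Longrightarrow> x \<in> Hom C X Y \<Longrightarrow> x = zerom C X Y" unfolding Zr_def by blast

end

context tc begin

context
  fixes A B D f g h
  assumes T: "(A, B, D, f, g, h) \<in> dist C"
begin

lemma R1: "(B, D, shO C A, g, h, smul C (-1) (shM C f)) \<in> dist C" using rot[OF T] .
lemma R2: "(D, shO C A, shO C B, h, smul C (-1) (shM C f), smul C (-1) (shM C g)) \<in> dist C" using rot[OF R1] .
lemma R3: "(shO C A, shO C B, shO C D, smul C (-1) (shM C f), smul C (-1) (shM C g), smul C (-1) (shM C h)) \<in> dist C"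
  using tsh[OF T] .

lemma wT: "A \<in> Ob C" "B \<in> Ob C" "D \<in> Ob C" "f \<in> Hom C A B" "g \<in> Hom C B D" "h \<in> Hom C D (shO C A)"
  using dist_wf[OF T] by auto
lemma wR3: "shO C A \<in> Ob C" "shO C B \<in> Ob C" "shO C D \<in> Ob C"
  "smul C (-1) (shM C f) \<in> Hom C (shO C A) (shO C B)"
  "smul C (-1) (shM C g) \<in> Hom C (shO C B) (shO C D)"
  using dist_wf[OF R3] by auto

lemma s1_gen: assumes W: "W \<in> Ob C" and z1: "Zr (shO C W) D" and z2: "Zr (shO C W) (shO C B)"
  shows "Zr (shO C W) (shO C A)"
  unfolding Zr_def
proof
  fix u assume u: "u \<in> Hom C (shO C W) (shO C A)"
  have W1: "shO C W \<in> Ob C" using sh_ob W by blast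
  have "cmp C (smul C (-1) (shM C f)) u \<in> Hom C (shO C W) (shO C B)" using cmp_hom W1 wR3 u by blast
  then have "cmp C (smul C (-1) (shM C f)) u = zerom C (shO C W) (shO C B)" using zr_mem z2 by blast
  then obtain v where v: "v \<in> Hom C (shO C W) D" "u = cmp C h v" using cov_exact[OF R2 W1 u] by blast
  have "v = zerom C (shO C W) D" using zr_mem z1 v by blast
  then show "u \<in> {zerom C (shO C W) (shO C A)}" using v cmp_zero_r[OF W1 wT(3) wR3(1) wT(6)] by simp
qed

lemma s1_Q: assumes W: "W \<in> Ob C" and z1: "Zr (shO C W) (shO C B)" and z2: "Zr (shO C W) B"
  shows "dd (shO C W) D b \<longleftrightarrow> dd (shO C W) (shO C A) b"
proof -
  have W1: "shO C W \<in> Ob C" using sh_ob W by blast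
  show ?thesis
  proof (rule post_lin[OF W1 wT(3) wR3(1) wT(6)])
    show "\<forall>u\<in>Hom C (shO C W) D. cmp C h u = zerom C (shO C W) (shO C A) \<longrightarrow> u = zerom C (shO C W) D"
    proof (intro ballI impI)
      fix v assume v: "v \<in> Hom C (shO C W) D" and e: "cmp C h v = zerom C (shO C W) (shO C A)"
      obtain w where w: "w \<in> Hom C (shO C W) B" "v = cmp C g w" using cov_exact[OF R1 W1 v e] by blast
      have "w = zerom C (shO C W) B" using zr_mem z2 w by blast
      then show "v = zerom C (shO C W) D" using w cmp_zero_r[OF W1 wT(2) wT(3) wT(5)] by simp
    qed
    show "\<forall>y\<in>Hom C (shO C W) (shO C A). \<exists>u\<in>Hom C (shO C W) D. y = cmp C h u"
    proof
      fix u assume u: "u \<in> Hom C (shO C W) (shO C A)"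
      have "cmp C (smul C (-1) (shM C f)) u \<in> Hom C (shO C W) (shO C B)" using cmp_hom W1 wR3 u by blast
      then have "cmp C (smul C (-1) (shM C f)) u = zerom C (shO C W) (shO C B)" using zr_mem z1 by blast
      then show "\<exists>v\<in>Hom C (shO C W) D. u = cmp C h v" using cov_exact[OF R2 W1 u] by blast
    qed
  qed
qed

lemma s1_S: assumes W: "W \<in> Ob C" and z1: "Zr (shO C W) D" and z2: "Zr (shO C W) (shO C D)"
  shows "dd (shO C W) (shO C A) b \<longleftrightarrow> dd (shO C W) (shO C B) b"
proof -
  have W1: "shO C W \<in> Ob C" using sh_ob W by blast
  show ?thesis
  proof (rule post_lin[OF W1 wR3(1) wR3(2) wR3(4)])
    show "\<forall>u\<in>Hom C (shO C W) (shO C A). cmp C (smul C (-1) (shM C f)) u = zerom C (shO C W) (shO C B) \<longrightarrow> u = zerom C (shO C W) (shO C A)"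
    proof (intro ballI impI)
      fix u assume u: "u \<in> Hom C (shO C W) (shO C A)" and e: "cmp C (smul C (-1) (shM C f)) u = zerom C (shO C W) (shO C B)"
      obtain v where v: "v \<in> Hom C (shO C W) D" "u = cmp C h v" using cov_exact[OF R2 W1 u e] by blast
      have "v = zerom C (shO C W) D" using zr_mem z1 v by blast
      then show "u = zerom C (shO C W) (shO C A)" using v cmp_zero_r[OF W1 wT(3) wR3(1) wT(6)] by simp
    qed
    show "\<forall>y\<in>Hom C (shO C W) (shO C B). \<exists>u\<in>Hom C (shO C W) (shO C A). y = cmp C (smul C (-1) (shM C f)) u"
    proof
      fix s assume s: "s \<in> Hom C (shO C W) (shO C B)"
      have "cmp C (smul C (-1) (shM C g)) s \<in> Hom C (shO C W) (shO C D)" using cmp_hom W1 wR3 s by blast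
      then have "cmp C (smul C (-1) (shM C g)) s = zerom C (shO C W) (shO C D)" using zr_mem z2 by blast
      then show "\<exists>u\<in>Hom C (shO C W) (shO C A). s = cmp C (smul C (-1) (shM C f)) u" using cov_exact[OF R3 W1 s] by blast
    qed
  qed
qed

lemma s1_i0: assumes one: "One (shO C B) (shO C B)" and gnz: "g \<noteq> zerom C B D" and z1: "Zr (shO C B) D"
  shows "Zr (shO C B) (shO C A)"
  unfolding Zr_def
proof
  fix u assume u: "u \<in> Hom C (shO C B) (shO C A)"
  note O = wR3(1,2,3) wT(3)
  define f1 where "f1 = smul C (-1) (shM C f)"
  define g1 where "g1 = smul C (-1) (shM C g)"
  have f1: "f1 \<in> Hom C (shO C A) (shO C B)" and g1: "g1 \<in> Hom C (shO C B) (shO C D)" using wR3 f1_def g1_def by auto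
  have g1nz: "g1 \<noteq> zerom C (shO C B) (shO C D)"
    unfolding g1_def using neg_nz[OF O(2,3)] sh_nz[OF wT(2,3,5) gnz] sh_hom[OF wT(2,3,5)] by blast
  have s: "cmp C f1 u \<in> Hom C (shO C B) (shO C B)" using cmp_hom O u f1 by blast
  obtain c where c: "cmp C f1 u = smul C c (idm C (shO C B))" using one_id[OF O(2) one s] by blast
  have "cmp C g1 (cmp C f1 u) = cmp C (cmp C g1 f1) u" using assoc[OF O(2,1,2,3) u f1 g1] .
  also have "cmp C g1 f1 = zerom C (shO C A) (shO C D)" using comp_zero[OF R3] f1_def g1_def by simp
  finally have "cmp C g1 (cmp C f1 u) = zerom C (shO C B) (shO C D)" using cmp_zero_l[OF O(2,1,3) u] by simp
  moreover have "cmp C g1 (cmp C f1 u) = smul C c g1"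
    using c cmp_smul_r[OF O(2,2,3) id_hom[OF O(2)] g1] id_r[OF O(2,3) g1] by simp
  ultimately have "smul C c g1 = zerom C (shO C B) (shO C D)" by simp
  then have c0: "c = 0" using smul_nz[OF O(2,3) g1] g1nz by blast
  have "cmp C f1 u = zerom C (shO C B) (shO C B)" using c c0 zero_smul[OF O(2,2) id_hom[OF O(2)]] by simp
  then obtain v where v: "v \<in> Hom C (shO C B) D" "u = cmp C h v" using cov_exact[OF R2 O(2) u] f1_def by blast
  have "v = zerom C (shO C B) D" using zr_mem z1 v by blast
  then show "u \<in> {zerom C (shO C B) (shO C A)}" using v cmp_zero_r[OF O(2) wT(3) wR3(1) wT(6)] by simp
qed

lemma s1_i1: assumes one: "One B D" and gnz: "g \<noteq> zerom C B D" and z1: "Zr B (shO C B)"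
  shows "Zr B (shO C A)"
  unfolding Zr_def
proof
  fix u assume u: "u \<in> Hom C B (shO C A)"
  have "cmp C (smul C (-1) (shM C f)) u \<in> Hom C B (shO C B)" using cmp_hom wT wR3 u by blast
  then have "cmp C (smul C (-1) (shM C f)) u = zerom C B (shO C B)" using zr_mem z1 by blast
  then obtain v where v: "v \<in> Hom C B D" "u = cmp C h v" using cov_exact[OF R2 wT(2) u] by blast
  obtain c where c: "v = smul C c g" using one_mult[OF wT(2,3) one wT(5) gnz v(1)] by blast
  have "cmp C h v = smul C c (cmp C h g)" using c cmp_smul_r[OF wT(2,3) wR3(1) wT(5,6)] by simp
  also have "\<dots> = zerom C B (shO C A)" using comp_zero2[OF T] smul_zero[OF wT(2) wR3(1)] by simp
  finally show "u \<in> {zerom C B (shO C A)}" using v by simp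
qed

lemma s2_gen: assumes W: "W \<in> Ob C" and z1: "Zr D (shO C W)" and z2: "Zr (shO C B) (shO C W)"
  shows "Zr (shO C A) (shO C W)"
  unfolding Zr_def
proof
  fix z assume z: "z \<in> Hom C (shO C A) (shO C W)"
  have W1: "shO C W \<in> Ob C" using sh_ob W by blast
  have "cmp C z h \<in> Hom C D (shO C W)" using cmp_hom wT wR3 W1 z by blast
  then have "cmp C z h = zerom C D (shO C W)" using zr_mem z1 by blast
  then obtain y where y: "y \<in> Hom C (shO C B) (shO C W)" "z = cmp C y (smul C (-1) (shM C f))"
    using contra_exact[OF R2 W1 z] by blast
  have "y = zerom C (shO C B) (shO C W)" using zr_mem z2 y by blast
  then show "z \<in> {zerom C (shO C A) (shO C W)}" using y cmp_zero_l[OF wR3(1,2) W1 wR3(4)] by simp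
qed

lemma s2_Q: assumes W: "W \<in> Ob C" and z1: "Zr (shO C D) (shO C W)" and z2: "Zr D (shO C W)"
  shows "dd (shO C B) (shO C W) b \<longleftrightarrow> dd (shO C A) (shO C W) b"
proof -
  have W1: "shO C W \<in> Ob C" using sh_ob W by blast
  show ?thesis
  proof (rule pre_lin[OF wR3(1,2) W1 wR3(4)])
    show "\<forall>x\<in>Hom C (shO C B) (shO C W). cmp C x (smul C (-1) (shM C f)) = zerom C (shO C A) (shO C W) \<longrightarrow> x = zerom C (shO C B) (shO C W)"
    proof (intro ballI impI)
      fix x assume x: "x \<in> Hom C (shO C B) (shO C W)" and e: "cmp C x (smul C (-1) (shM C f)) = zerom C (shO C A) (shO C W)"
      obtain y where y: "y \<in> Hom C (shO C D) (shO C W)" "x = cmp C y (smul C (-1) (shM C g))"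
        using contra_exact[OF R3 W1 x e] by blast
      have "y = zerom C (shO C D) (shO C W)" using zr_mem z1 y by blast
      then show "x = zerom C (shO C B) (shO C W)" using y cmp_zero_l[OF wR3(2,3) W1 wR3(5)] by simp
    qed
    show "\<forall>y\<in>Hom C (shO C A) (shO C W). \<exists>x\<in>Hom C (shO C B) (shO C W). y = cmp C x (smul C (-1) (shM C f))"
    proof
      fix z assume z: "z \<in> Hom C (shO C A) (shO C W)"
      have "cmp C z h \<in> Hom C D (shO C W)" using cmp_hom wT wR3 W1 z by blast
      then have "cmp C z h = zerom C D (shO C W)" using zr_mem z2 by blast
      then show "\<exists>x\<in>Hom C (shO C B) (shO C W). z = cmp C x (smul C (-1) (shM C f))"
        using contra_exact[OF R2 W1 z] by blast
    qed
  qed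
qed

lemma s2_S: assumes W: "W \<in> Ob C" and z1: "Zr (shO C B) (shO C W)" and z2: "Zr B (shO C W)"
  shows "dd (shO C A) (shO C W) b \<longleftrightarrow> dd D (shO C W) b"
proof -
  have W1: "shO C W \<in> Ob C" using sh_ob W by blast
  show ?thesis
  proof (rule pre_lin[OF wT(3) wR3(1) W1 wT(6)])
    show "\<forall>x\<in>Hom C (shO C A) (shO C W). cmp C x h = zerom C D (shO C W) \<longrightarrow> x = zerom C (shO C A) (shO C W)"
    proof (intro ballI impI)
      fix x assume x: "x \<in> Hom C (shO C A) (shO C W)" and e: "cmp C x h = zerom C D (shO C W)"
      obtain y where y: "y \<in> Hom C (shO C B) (shO C W)" "x = cmp C y (smul C (-1) (shM C f))"
        using contra_exact[OF R2 W1 x e] by blast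
      have "y = zerom C (shO C B) (shO C W)" using zr_mem z1 y by blast
      then show "x = zerom C (shO C A) (shO C W)" using y cmp_zero_l[OF wR3(1,2) W1 wR3(4)] by simp
    qed
    show "\<forall>y\<in>Hom C D (shO C W). \<exists>x\<in>Hom C (shO C A) (shO C W). y = cmp C x h"
    proof
      fix s assume s: "s \<in> Hom C D (shO C W)"
      have "cmp C s g \<in> Hom C B (shO C W)" using cmp_hom wT W1 s by blast
      then have "cmp C s g = zerom C B (shO C W)" using zr_mem z2 by blast
      then show "\<exists>x\<in>Hom C (shO C A) (shO C W). s = cmp C x h"
        using contra_exact[OF R1 W1 s] by blast
    qed
  qed
qed

end
end

context tc begin

lemma shn_tri: assumes T: "(A, B, D, f, g, h) \<in> dist C" and gnz: "g \<noteq> zerom C B D"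
  shows "\<exists>f' g' h'. ((shO C ^^ q) A, (shO C ^^ q) B, (shO C ^^ q) D, f', g', h') \<in> dist C
          \<and> g' \<noteq> zerom C ((shO C ^^ q) B) ((shO C ^^ q) D)"
proof (induction q)
  case 0 then show ?case using T gnz by auto
next
  case (Suc q)
  then obtain f' g' h' where T': "((shO C ^^ q) A, (shO C ^^ q) B, (shO C ^^ q) D, f', g', h') \<in> dist C"
    and g': "g' \<noteq> zerom C ((shO C ^^ q) B) ((shO C ^^ q) D)" by blast
  note w = dist_wf[OF T']
  have O: "(shO C ^^ q) B \<in> Ob C" "(shO C ^^ q) D \<in> Ob C" using w by auto
  have "shM C g' \<noteq> zerom C (shO C ((shO C ^^ q) B)) (shO C ((shO C ^^ q) D))"
    using sh_nz[OF O] w g' by blast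
  then have "smul C (-1) (shM C g') \<noteq> zerom C (shO C ((shO C ^^ q) B)) (shO C ((shO C ^^ q) D))"
    using neg_nz[OF sh_ob[OF O(1)] sh_ob[OF O(2)]] sh_hom[OF O] w by blast
  then show ?case using tsh[OF T'] by auto
qed

definition edim :: "'o \<Rightarrow> 'o \<Rightarrow> int \<Rightarrow> bool \<Rightarrow> bool" where
  "edim X Y i b \<longleftrightarrow> (\<forall>p q. int q - int p = i \<longrightarrow> dd ((shO C ^^ p) X) ((shO C ^^ q) Y) b)"

lemma dd_shr: assumes "X \<in> Ob C" "Y \<in> Ob C"
  shows "dd X Y b \<longleftrightarrow> dd ((shO C ^^ r) X) ((shO C ^^ r) Y) b"
proof (induction r)
  case 0 then show ?case by simp
next
  case (Suc r)
  have "dd ((shO C ^^ r) X) ((shO C ^^ r) Y) b \<longleftrightarrow> dd ((shO C ^^ Suc r) X) ((shO C ^^ Suc r) Y) b"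
    using sh_dd[OF shn_ob[OF assms(1)] shn_ob[OF assms(2)], of r r b] by simp
  then show ?case using Suc by simp
qed

lemma edim_intro: assumes O: "X \<in> Ob C" "Y \<in> Ob C"
  and d: "dd ((shO C ^^ p0) X) ((shO C ^^ q0) Y) b" and i: "i = int q0 - int p0"
  shows "edim X Y i b"
  unfolding edim_def
proof (intro allI impI)
  fix p q assume pq: "int q - int p = i"
  show "dd ((shO C ^^ p) X) ((shO C ^^ q) Y) b"
  proof (cases "p0 \<le> p")
    case True
    define r where "r = p - p0"
    have p: "p = r + p0" and q: "q = r + q0" using True pq i r_def by auto
    show ?thesis using dd_shr[OF shn_ob[OF O(1)] shn_ob[OF O(2)], of p0 q0 b r] d
      unfolding p q funpow_add by simp
  next
    case False
    define r where "r = p0 - p"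
    have p: "p0 = r + p" and q: "q0 = r + q" using False pq i r_def by auto
    show ?thesis using dd_shr[OF shn_ob[OF O(1)] shn_ob[OF O(2)], of p q b r] d
      unfolding p q funpow_add by simp
  qed
qed

lemma edim_get: "edim X Y i b \<Longrightarrow> int q - int p = i \<Longrightarrow> X' = (shO C ^^ p) X \<Longrightarrow> Y' = (shO C ^^ q) Y \<Longrightarrow> dd X' Y' b"
  unfolding edim_def by blast

lemma spans_nil: "spans C X Y [] \<longleftrightarrow> Hom C X Y \<subseteq> {zerom C X Y}"
  unfolding spans_def by auto

lemma spans_one: assumes "X \<in> Ob C" "Y \<in> Ob C"
  shows "spans C X Y [v] \<longleftrightarrow> v \<in> Hom C X Y \<and> (\<forall>x\<in>Hom C X Y. \<exists>c. x = smul C c v)"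
proof -
  have e: "{lincomb C X Y (zip cs [v]) | cs. length cs = length [v]} = {addm C (smul C c v) (zerom C X Y) | c. True}"
  proof (rule set_eqI, rule iffI)
    fix x assume "x \<in> {lincomb C X Y (zip cs [v]) | cs. length cs = length [v]}"
    then obtain cs where "x = lincomb C X Y (zip cs [v])" "length cs = 1" by auto
    then obtain c where "cs = [c]" "x = lincomb C X Y (zip cs [v])" by (cases cs) auto
    then show "x \<in> {addm C (smul C c v) (zerom C X Y) | c. True}" by auto
  next
    fix x assume "x \<in> {addm C (smul C c v) (zerom C X Y) | c. True}"
    then obtain c where "x = addm C (smul C c v) (zerom C X Y)" by auto
    then have "x = lincomb C X Y (zip [c] [v])" by simp
    moreover have "length [c] = length [v]" by simp
    ultimately show "x \<in> {lincomb C X Y (zip cs [v]) | cs. length cs = length [v]}" by blast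
  qed
  show ?thesis
  proof
    assume s: "spans C X Y [v]"
    then have v: "v \<in> Hom C X Y" unfolding spans_def by simp
    have "\<forall>x\<in>Hom C X Y. \<exists>c. x = smul C c v"
    proof
      fix x assume "x \<in> Hom C X Y"
      then obtain c where "x = addm C (smul C c v) (zerom C X Y)" using s e unfolding spans_def by blast
      then show "\<exists>c. x = smul C c v" using add_zero[OF assms smul_hom[OF assms v]] by metis
    qed
    then show "v \<in> Hom C X Y \<and> (\<forall>x\<in>Hom C X Y. \<exists>c. x = smul C c v)" using v by blast
  next
    assume r: "v \<in> Hom C X Y \<and> (\<forall>x\<in>Hom C X Y. \<exists>c. x = smul C c v)"
    have "Hom C X Y \<subseteq> {addm C (smul C c v) (zerom C X Y) | c. True}"
    proof
      fix x assume "x \<in> Hom C X Y"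
      then obtain c where "x = smul C c v" using r by blast
      then have "x = addm C (smul C c v) (zerom C X Y)" using add_zero[OF assms smul_hom[OF assms]] r by metis
      then show "x \<in> {addm C (smul C c v) (zerom C X Y) | c. True}" by blast
    qed
    then show "spans C X Y [v]" unfolding spans_def using e r by simp
  qed
qed

lemma hdim_zr: assumes "Zr X Y" shows "hdim C X Y = 0"
proof -
  have "\<exists>vs. length vs = 0 \<and> spans C X Y vs" using spans_nil assms unfolding Zr_def by auto
  then have "(LEAST n. \<exists>vs. length vs = n \<and> spans C X Y vs) \<le> 0" by (rule Least_le)
  then show ?thesis unfolding hdim_def by simp
qed

lemma hdim_one: assumes O: "X \<in> Ob C" "Y \<in> Ob C" and one: "One X Y" shows "hdim C X Y = 1"
proof -
  obtain v where v: "v \<in> Hom C X Y" "v \<noteq> zerom C X Y" "\<forall>x\<in>Hom C X Y. \<exists>c. x = smul C c v"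
    using one unfolding One_def by blast
  have s1: "spans C X Y [v]" using spans_one[OF O] v by blast
  have n0: "\<not> spans C X Y []" using spans_nil v by blast
  show ?thesis unfolding hdim_def
  proof (rule Least_equality)
    show "\<exists>vs. length vs = 1 \<and> spans C X Y vs" using s1 by (intro exI[of _ "[v]"]) simp
    fix n assume "\<exists>vs. length vs = n \<and> spans C X Y vs"
    then obtain vs where "length vs = n" "spans C X Y vs" by blast
    then show "1 \<le> n" using n0 by (cases n) auto
  qed
qed

lemma dd_hdim: "X \<in> Ob C \<Longrightarrow> Y \<in> Ob C \<Longrightarrow> dd X Y b \<Longrightarrow> hdim C X Y = (if b then 1 else 0)"
  unfolding dd_def using hdim_zr hdim_one by (cases b) auto

lemma hdim_dd: assumes O: "X \<in> Ob C" "Y \<in> Ob C" and ex: "\<exists>vs. spans C X Y vs"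
  and h: "hdim C X Y = (if b then 1 else 0)" shows "dd X Y b"
proof -
  have ex': "\<exists>n vs. length vs = n \<and> spans C X Y vs" using ex by blast
  obtain vs where vs: "length vs = hdim C X Y" "spans C X Y vs"
    using LeastI_ex[OF ex'] unfolding hdim_def by blast
  show ?thesis
  proof (cases b)
    case False
    then have "vs = []" using vs h by simp
    then show ?thesis using vs False spans_nil unfolding dd_def Zr_def by simp
  next
    case True
    then have "length vs = 1" using vs h by simp
    then obtain v where v: "vs = [v]" by (cases vs) auto
    have n0: "\<not> spans C X Y []"
    proof
      assume "spans C X Y []"
      then have "\<exists>vs. length vs = 0 \<and> spans C X Y vs" by auto
      then have "(LEAST n. \<exists>vs. length vs = n \<and> spans C X Y vs) \<le> 0" by (rule Least_le)
      then have "hdim C X Y \<le> 0" unfolding hdim_def by simp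
      then show False using h True by simp
    qed
    have r: "v \<in> Hom C X Y \<and> (\<forall>x\<in>Hom C X Y. \<exists>c. x = smul C c v)" using spans_one[OF O] vs v by simp
    have "v \<noteq> zerom C X Y"
    proof
      assume "v = zerom C X Y"
      then have "Hom C X Y \<subseteq> {zerom C X Y}" using r smul_zero[OF O] by auto
      then show False using n0 spans_nil by blast
    qed
    then show ?thesis using True r unfolding dd_def One_def by (simp only: if_True) blast
  qed
qed

lemma ext_dim_edim: assumes O: "X \<in> Ob C" "Y \<in> Ob C" and e: "edim X Y i b"
  shows "ext_dim C X Y i = (if b then 1 else 0)"
proof (cases "0 \<le> i")
  case True
  have "dd X ((shO C ^^ nat i) Y) b" using edim_get[OF e, of "nat i" 0] True by simp
  then show ?thesis unfolding ext_dim_def using True dd_hdim O shn_ob by simp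
next
  case False
  have "dd ((shO C ^^ nat (-i)) X) Y b" using edim_get[OF e, of 0 "nat (-i)"] False by simp
  then show ?thesis unfolding ext_dim_def using False dd_hdim O shn_ob by simp
qed

lemma edim_ext_dim: assumes O: "X \<in> Ob C" "Y \<in> Ob C" and ft: "finite_type C"
  and e: "ext_dim C X Y i = (if b then 1 else 0)"
  shows "edim X Y i b"
proof (cases "0 \<le> i")
  case True
  have ex: "\<exists>vs. spans C X ((shO C ^^ nat i) Y) vs" using ft O unfolding finite_type_def by blast
  have "dd X ((shO C ^^ nat i) Y) b" using hdim_dd[OF O(1) shn_ob[OF O(2)] ex] e True
    unfolding ext_dim_def by simp
  then show ?thesis using edim_intro[OF O, of 0 "nat i"] True by simp
next
  case False
  have ex: "\<exists>vs. spans C ((shO C ^^ nat (-i)) X) Y vs" using ft O unfolding finite_type_def by blast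
  have "dd ((shO C ^^ nat (-i)) X) Y b" using hdim_dd[OF shn_ob[OF O(1)] O(2) ex] e False
    unfolding ext_dim_def by simp
  then show ?thesis using edim_intro[OF O, of "nat (-i)" 0] False by simp
qed

end

lemma fp1: "F ((F ^^ p) X) = (F ^^ (p+1)) X" by simp
lemma fp2: "(F ^^ q) (F (F X)) = (F ^^ (q+2)) X" by (induction q) auto
lemma fp3: "F ((F ^^ q) (F (F X))) = (F ^^ (q+3)) X"
proof -
  have "F ((F ^^ q) (F (F X))) = F ((F ^^ (q+2)) X)" using fp2 by metis
  also have "\<dots> = (F ^^ (Suc (q+2))) X" by simp
  finally show ?thesis by (simp add: numeral_3_eq_3)
qed

definition Fm :: "nat \<Rightarrow> nat \<Rightarrow> int \<Rightarrow> bool" where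
  "Fm m n i \<longleftrightarrow> (1 - int n \<le> i \<and> i \<le> int m - int n) \<or> (2 \<le> i \<and> i \<le> int m + 1)"

context tc begin

lemma ddF: "dd X Y b \<Longrightarrow> \<not> b \<Longrightarrow> Zr X Y" unfolding dd_def by simp
lemma ddT: "dd X Y b \<Longrightarrow> b \<Longrightarrow> One X Y" unfolding dd_def by simp
lemma dd_eqb: "dd X Y b \<Longrightarrow> b = b' \<Longrightarrow> dd X Y b'" by simp

lemma step1:
  assumes T: "(A', E, sh2 C Y, a, b, c) \<in> dist C" and bnz: "b \<noteq> zerom C E (sh2 C Y)"
  and YO: "Y \<in> Ob C" and n: "1 \<le> n"
  and IH: "\<And>i. edim E Y i (i = 1 - int n \<or> i = 2)"
  and EE: "\<And>i. edim E E i (i = 0 \<or> i = 2)"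
  shows "edim E A' i (i = 1 - int (n + 1) \<or> i = 2)"
proof -
  have EO: "E \<in> Ob C" and AO: "A' \<in> Ob C" using dist_wf[OF T] by auto
  define p where "p = (if 0 \<le> i then 0 else nat (-i))"
  define q where "q = (if 0 \<le> i then nat i else 0)"
  have pq: "int q - int p = i" unfolding p_def q_def by auto
  obtain f g h where T': "((shO C ^^ q) A', (shO C ^^ q) E, (shO C ^^ q) (sh2 C Y), f, g, h) \<in> dist C"
    and gnz: "g \<noteq> zerom C ((shO C ^^ q) E) ((shO C ^^ q) (sh2 C Y))"
    using shn_tri[OF T bnz] by blast
  define W where "W = (shO C ^^ p) E"
  have WO: "W \<in> Ob C" unfolding W_def using shn_ob EO by blast
  have W1: "shO C W = (shO C ^^ (p+1)) E" unfolding W_def by simp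
  have Qd: "dd (shO C W) ((shO C ^^ q) (sh2 C Y)) (i + 1 = 1 - int n \<or> i + 1 = 2)"
    by (rule edim_get[OF IH[of "i+1"], of "q+2" "p+1"]) (use pq W1 fp2 in auto)
  have Sd: "dd (shO C W) (shO C ((shO C ^^ q) E)) (i = 0 \<or> i = 2)"
    by (rule edim_get[OF EE[of "i"], of "q+1" "p+1"]) (use pq W1 in auto)
  have Pd: "dd (shO C W) ((shO C ^^ q) E) (i - 1 = 0 \<or> i - 1 = 2)"
    by (rule edim_get[OF EE[of "i-1"], of "q" "p+1"]) (use pq W1 in auto)
  have Td: "dd (shO C W) (shO C ((shO C ^^ q) (sh2 C Y))) (i + 2 = 1 - int n \<or> i + 2 = 2)"
    by (rule edim_get[OF IH[of "i+2"], of "q+3" "p+1"]) (use pq W1 fp3 in auto)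
  have goal: "dd (shO C W) (shO C ((shO C ^^ q) A')) (i = 1 - int (n + 1) \<or> i = 2)"
  proof -
    consider (a) "i = - int n" | (b) "i = 2" | (c) "i = 0" | (d) "i = 1"
      | (e) "i \<noteq> - int n" "i \<noteq> 2" "i \<noteq> 0" "i \<noteq> 1" by blast
    then show ?thesis
    proof cases
      case a
      have "Zr (shO C W) (shO C ((shO C ^^ q) E))" using ddF[OF Sd] a n by simp
      moreover have "Zr (shO C W) ((shO C ^^ q) E)" using ddF[OF Pd] a n by simp
      ultimately have "dd (shO C W) ((shO C ^^ q) (sh2 C Y)) True \<longleftrightarrow> dd (shO C W) (shO C ((shO C ^^ q) A')) True"
        using s1_Q[OF T' WO] by blast
      moreover have "dd (shO C W) ((shO C ^^ q) (sh2 C Y)) True" using dd_eqb[OF Qd] a by simp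
      ultimately show ?thesis using a by simp
    next
      case b
      have "Zr (shO C W) ((shO C ^^ q) (sh2 C Y))" using ddF[OF Qd] b n by simp
      moreover have "Zr (shO C W) (shO C ((shO C ^^ q) (sh2 C Y)))" using ddF[OF Td] b n by simp
      ultimately have "dd (shO C W) (shO C ((shO C ^^ q) A')) True \<longleftrightarrow> dd (shO C W) (shO C ((shO C ^^ q) E)) True"
        using s1_S[OF T' WO] by blast
      moreover have "dd (shO C W) (shO C ((shO C ^^ q) E)) True" using dd_eqb[OF Sd] b by simp
      ultimately show ?thesis using b by simp
    next
      case c
      have pq0: "p = 0" "q = 0" using c unfolding p_def q_def by auto
      have WE: "W = (shO C ^^ q) E" unfolding W_def pq0 by simp
      have "One (shO C ((shO C ^^ q) E)) (shO C ((shO C ^^ q) E))" using ddT[OF Sd] c WE by simp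
      moreover have "Zr (shO C ((shO C ^^ q) E)) ((shO C ^^ q) (sh2 C Y))" using ddF[OF Qd] c n WE by simp
      ultimately have "Zr (shO C ((shO C ^^ q) E)) (shO C ((shO C ^^ q) A'))" using s1_i0[OF T'] gnz by blast
      then show ?thesis using c n WE unfolding dd_def by simp
    next
      case d
      have pq0: "p = 0" "q = 1" using d unfolding p_def q_def by auto
      have WE: "shO C W = (shO C ^^ q) E" unfolding W_def pq0 by simp
      have "One ((shO C ^^ q) E) ((shO C ^^ q) (sh2 C Y))" using ddT[OF Qd] d WE by simp
      moreover have "Zr ((shO C ^^ q) E) (shO C ((shO C ^^ q) E))" using ddF[OF Sd] d WE by simp
      ultimately have "Zr ((shO C ^^ q) E) (shO C ((shO C ^^ q) A'))" using s1_i1[OF T'] gnz by blast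
      then show ?thesis using d n WE unfolding dd_def by simp
    next
      case e
      have "Zr (shO C W) ((shO C ^^ q) (sh2 C Y))" using ddF[OF Qd] e n by auto
      moreover have "Zr (shO C W) (shO C ((shO C ^^ q) E))" using ddF[OF Sd] e by simp
      ultimately have "Zr (shO C W) (shO C ((shO C ^^ q) A'))" using s1_gen[OF T' WO] by blast
      then show ?thesis using e n unfolding dd_def by auto
    qed
  qed
  show ?thesis
    by (rule edim_intro[OF EO AO, of "p+1" "q+1"]) (use goal W1 pq in auto)
qed

end

context tc begin

lemma step2:
  assumes T: "(A', E, sh2 C Y, a, b, c) \<in> dist C" and bnz: "b \<noteq> zerom C E (sh2 C Y)"
  and YO: "Y \<in> Ob C" and VO: "V \<in> Ob C" and m: "1 \<le> m" and mn: "m + 1 \<le> n"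
  and IH: "\<And>i. edim Y V i (Fm m n i)"
  and EV: "\<And>i. edim E V i (i = 1 - int n \<or> i = 2)"
  shows "edim A' V i (Fm (m + 1) n i)"
proof -
  have EO: "E \<in> Ob C" and AO: "A' \<in> Ob C" using dist_wf[OF T] by auto
  define p where "p = (if 0 \<le> i then 0 else nat (-i))"
  define q where "q = (if 0 \<le> i then nat i else 0)"
  have pq: "int q - int p = i" unfolding p_def q_def by auto
  obtain f g h where T': "((shO C ^^ p) A', (shO C ^^ p) E, (shO C ^^ p) (sh2 C Y), f, g, h) \<in> dist C"
    using shn_tri[OF T bnz] by blast
  define W where "W = (shO C ^^ q) V"
  have WO: "W \<in> Ob C" unfolding W_def using shn_ob VO by blast
  have W1: "shO C W = (shO C ^^ (q+1)) V" unfolding W_def by simp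
  have Qd: "dd (shO C ((shO C ^^ p) E)) (shO C W) (i = 1 - int n \<or> i = 2)"
    by (rule edim_get[OF EV[of "i"], of "q+1" "p+1"]) (use pq W1 in auto)
  have Pd: "dd (shO C ((shO C ^^ p) (sh2 C Y))) (shO C W) (Fm m n (i - 2))"
    by (rule edim_get[OF IH[of "i-2"], of "q+1" "p+3"]) (use pq W1 fp3 in auto)
  have Sd: "dd ((shO C ^^ p) (sh2 C Y)) (shO C W) (Fm m n (i - 1))"
    by (rule edim_get[OF IH[of "i-1"], of "q+1" "p+2"]) (use pq W1 fp2 in auto)
  have Td: "dd ((shO C ^^ p) E) (shO C W) (i + 1 = 1 - int n \<or> i + 1 = 2)"
    by (rule edim_get[OF EV[of "i+1"], of "q+1" "p"]) (use pq W1 in auto)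
  have goal: "dd (shO C ((shO C ^^ p) A')) (shO C W) (Fm (m + 1) n i)"
  proof -
    consider (Q) "i = 1 - int n \<or> i = 2" | (S) "Fm m n (i - 1)" | (N) "\<not> (i = 1 - int n \<or> i = 2)" "\<not> Fm m n (i - 1)"
      by blast
    then show ?thesis
    proof cases
      case Q
      have a1: "\<not> Fm m n (i - 2)" "\<not> Fm m n (i - 1)" "Fm (m + 1) n i"
        using Q m mn unfolding Fm_def by auto
      have "Zr (shO C ((shO C ^^ p) (sh2 C Y))) (shO C W)" using ddF[OF Pd] a1 by simp
      moreover have "Zr ((shO C ^^ p) (sh2 C Y)) (shO C W)" using ddF[OF Sd] a1 by simp
      ultimately have "dd (shO C ((shO C ^^ p) E)) (shO C W) True \<longleftrightarrow> dd (shO C ((shO C ^^ p) A')) (shO C W) True"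
        using s2_Q[OF T' WO] by blast
      moreover have "dd (shO C ((shO C ^^ p) E)) (shO C W) True" using dd_eqb[OF Qd] Q by simp
      ultimately show ?thesis using a1 by simp
    next
      case S
      have a1: "\<not> (i = 1 - int n \<or> i = 2)" "\<not> (i + 1 = 1 - int n \<or> i + 1 = 2)" "Fm (m + 1) n i"
        using S m mn unfolding Fm_def by auto
      have "Zr (shO C ((shO C ^^ p) E)) (shO C W)" using ddF[OF Qd] a1 by simp
      moreover have "Zr ((shO C ^^ p) E) (shO C W)" using ddF[OF Td] a1 by simp
      ultimately have "dd (shO C ((shO C ^^ p) A')) (shO C W) True \<longleftrightarrow> dd ((shO C ^^ p) (sh2 C Y)) (shO C W) True"
        using s2_S[OF T' WO] by blast
      moreover have "dd ((shO C ^^ p) (sh2 C Y)) (shO C W) True" using dd_eqb[OF Sd] S by simp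
      ultimately show ?thesis using a1 by simp
    next
      case N
      have a1: "\<not> Fm (m + 1) n i" using N m mn unfolding Fm_def by auto
      have "Zr (shO C ((shO C ^^ p) E)) (shO C W)" using ddF[OF Qd] N by simp
      moreover have "Zr ((shO C ^^ p) (sh2 C Y)) (shO C W)" using ddF[OF Sd] N by simp
      ultimately have "Zr (shO C ((shO C ^^ p) A')) (shO C W)" using s2_gen[OF T' WO] by blast
      then show ?thesis using a1 unfolding dd_def by simp
    qed
  qed
  show ?thesis
    by (rule edim_intro[OF AO VO, of "p+1" "q+1"]) (use goal W1 pq in auto)
qed

end

theorem lemma2p12:
  fixes C :: "('o, 'm, 'k::field) kcat" and E :: 'o and En :: "nat \<Rightarrow> 'o"
  assumes char: "(2::'k) \<noteq> 0"
    and K3: "K3_category C"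
    and sph: "spherical C E"
    and E1: "En 1 = E"
    and tri: "\<forall>n\<ge>1. \<exists>a b c. (En (n + 1), E, sh2 C (En n), a, b, c) \<in> dist C
                              \<and> b \<noteq> zerom C E (sh2 C (En n))"
  shows "(\<forall>n\<ge>1. hdim C E (sh2 C (En n)) = 1) \<and>
         (\<forall>m n i. 1 \<le> m \<and> m \<le> n \<longrightarrow>
            ext_dim C (En m) (En n) i =
              (if - int n + 1 \<le> i \<and> i \<le> - int n + int m then 1
               else if 2 \<le> i \<and> i \<le> int m + 1 then 1 else 0))"
proof -
  have trc: "triangulated C" and ft: "finite_type C" using K3 unfolding K3_category_def by auto
  interpret tc C by (rule tc.intro[OF trc])
  have EO: "E \<in> Ob C" using sph unfolding spherical_def by blast
  have EnO: "En n \<in> Ob C" if "1 \<le> n" for n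
    using that
  proof (induction n rule: nat_induct_at_least)
    case base then show ?case using E1 EO by simp
  next
    case (Suc n)
    then obtain a b c where "(En (n + 1), E, sh2 C (En n), a, b, c) \<in> dist C" using tri by blast
    then show ?case using dist_wf by simp
  qed
  have EE: "edim E E i (i = 0 \<or> i = 2)" for i
  proof -
    have "ext_dim C E E i = (if i = 0 \<or> i = 2 then 1 else 0)"
      using sph unfolding spherical_def by auto
    then show ?thesis using edim_ext_dim[OF EO EO ft] by blast
  qed
  have S1: "\<And>i. edim E (En n) i (i = 1 - int n \<or> i = 2)" if "1 \<le> n" for n
    using that
  proof (induction n rule: nat_induct_at_least)
    case base then show ?case using E1 EE by simp
  next
    case (Suc n)
    obtain a b c where T: "(En (n + 1), E, sh2 C (En n), a, b, c) \<in> dist C"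
      and bnz: "b \<noteq> zerom C E (sh2 C (En n))" using tri Suc by blast
    show ?case using step1[OF T bnz EnO[OF Suc(1)] Suc(1) Suc(2) EE] by simp
  qed
  have S2: "\<And>i. edim (En m) (En n) i (Fm m n i)" if "1 \<le> n" "1 \<le> m" "m \<le> n" for m n
    using that(2,3)
  proof (induction m rule: nat_induct_at_least)
    case base
    have e: "Fm 1 n i = (i = 1 - int n \<or> i = 2)" for i unfolding Fm_def by auto
    show ?case using S1[OF that(1)] E1 e by simp
  next
    case (Suc m)
    obtain a b c where T: "(En (m + 1), E, sh2 C (En m), a, b, c) \<in> dist C"
      and bnz: "b \<noteq> zerom C E (sh2 C (En m))" using tri Suc by blast
    show ?case using step2[OF T bnz EnO[OF Suc(1)] EnO[OF that(1)] Suc(1) _ Suc(2) S1[OF that(1)]] Suc(3) by simp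
  qed
  show ?thesis
  proof (intro conjI allI impI)
    fix n :: nat assume n: "1 \<le> n"
    have "dd E ((shO C ^^ 2) (En n)) True"
      using edim_get[OF S1[OF n, of 2], of 2 0] by simp
    then have d: "dd E (sh2 C (En n)) True" by (simp add: numeral_2_eq_2)
    have "sh2 C (En n) \<in> Ob C" using sh_ob EnO[OF n] by blast
    then show "hdim C E (sh2 C (En n)) = 1"
      using dd_hdim[OF EO _ d] by simp
  next
    fix m n :: nat and i assume mn: "1 \<le> m \<and> m \<le> n"
    have "ext_dim C (En m) (En n) i = (if Fm m n i then 1 else 0)"
      using ext_dim_edim[OF EnO EnO S2] mn by auto
    then show "ext_dim C (En m) (En n) i =
              (if - int n + 1 \<le> i \<and> i \<le> - int n + int m then 1
               else if 2 \<le> i \<and> i \<le> int m + 1 then 1 else 0)"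
      unfolding Fm_def by auto
  qed
qed

end
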